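(* Let $k\ge 3$ be an integer, $A\geq 1$, $B\geq 1$, $\alpha\in\mathbb{R}$, and suppose that $r\in\mathbb{Z}$ and $q\in\mathbb{N}$ are coprime with $|\alpha-r/q|\leq q^{-2}$. Then for every $\varepsilon>0$, $$\sum_{0<|a|\leq A}|f(a\alpha)|^{2^{k-1}}\ll AB^{2^{k-1}}\Bigl(\frac1q+\frac1B+\frac{q}{AB^k}\Bigr)(ABq)^{\varepsilon},$$ where the sum is over non-zero integers $a$ and the implicit constant depends only on $k$ and $\varepsilon$.
   Context: $e(\alpha)=\exp(2\pi i\alpha)$ and $f(\alpha)=\sum_{1\le|x|\le B}e(\alpha x^k)$, the sum over integers $x$. *)

theory Defs
  imports Complex_Main
begin

definition e :: "real \<Rightarrow> complex" where
  "e t = exp (2 * pi * \<i> * complex_of_real t)"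

definition weyl_f :: "nat \<Rightarrow> real \<Rightarrow> real \<Rightarrow> complex" where
  "weyl_f k B \<alpha> = (\<Sum>x\<in>{x::int. 1 \<le> \<bar>x\<bar> \<and> real_of_int \<bar>x\<bar> \<le> B}. e (\<alpha> * real_of_int x ^ k))"

end

theory Submission
  imports Defs "HOL-Analysis.Convex" "HOL-Computational_Algebra.Primes"
begin

lemma e_cis: "e t = cis (2 * pi * t)"
  unfolding e_def cis_conv_exp by (simp add: algebra_simps)

lemma e_add: "e (a + b) = e a * e b"
  unfolding e_cis by (simp add: cis_mult algebra_simps)

lemma e_norm [simp]: "norm (e a) = 1"
  unfolding e_cis by simp

lemma e_cnj: "cnj (e a) = e (- a)"
  unfolding e_cis by (simp add: cis_cnj)

lemma e_mult_cnj: "e a * cnj (e b) = e (a - b)"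
  by (simp add: e_cnj e_add[symmetric])

lemma e_int [simp]: "e (of_int m) = 1"
  unfolding e_cis by (rule cis_multiple_2pi) simp

lemma e_nat_mult: "e (c * of_nat i) = e c ^ i"
  unfolding e_cis DeMoivre by (simp add: algebra_simps)

definition dint :: "real \<Rightarrow> real" where "dint t = \<bar>t - of_int (round t)\<bar>"

lemma dint_nonneg: "dint t \<ge> 0" by (simp add: dint_def)

lemma dint_le_half: "dint t \<le> 1/2"
  unfolding dint_def using of_int_round_abs_le[of t] by (simp add: abs_minus_commute)

lemma dint_le: "dint t \<le> \<bar>t - of_int m\<bar>"
proof (rule ccontr)
  assume a: "\<not> ?thesis"
  have h: "\<bar>t - of_int (round t)\<bar> \<le> 1/2" using of_int_round_abs_le[of t] by (simp add: abs_minus_commute)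
  have "\<bar>of_int m - of_int (round t)\<bar> < (1::real)" using a h unfolding dint_def by linarith
  hence "m = round t" by linarith
  thus False using a unfolding dint_def by simp
qed

lemma dint_minus: "dint (- t) = dint t"
proof -
  have "dint (-t) \<le> dint t" using dint_le[of "-t" "- round t"] by (simp add: dint_def abs_minus_commute)
  moreover have "dint t \<le> dint (-t)" using dint_le[of "t" "- round (-t)"] by (simp add: dint_def abs_minus_commute)
  ultimately show ?thesis by simp
qed

lemma sin_ge_half: assumes "0 \<le> x" "x \<le> pi/2" shows "sin x \<ge> x / 3"
proof (cases "x \<le> pi/3")
  case True
  let ?f = "\<lambda>x. sin x - x/3"
  have "\<And>u. \<lbrakk>0 \<le> u; u \<le> x\<rbrakk> \<Longrightarrow> (?f has_real_derivative cos u - 1/3) (at u)"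
    by (auto intro!: derivative_eq_intros)
  moreover have "\<And>u. \<lbrakk>0 \<le> u; u \<le> x\<rbrakk> \<Longrightarrow> cos u - 1/3 \<ge> 0"
  proof -
    fix u assume "0 \<le> u" "u \<le> x"
    hence "cos (pi/3) \<le> cos u" using True by (intro cos_monotone_0_pi_le) auto
    thus "cos u - 1/3 \<ge> 0" by (simp add: cos_60)
  qed
  ultimately have "?f x \<ge> ?f 0"
    using DERIV_nonneg_imp_nondecreasing[OF assms(1)] by blast
  thus ?thesis by simp
next
  case False
  have "sin (pi/3) \<le> sin x" using False assms by (subst sin_mono_le_eq) auto
  moreover have "sin (pi/3) = sqrt 3 / 2" by (simp add: sin_60)
  moreover have "sqrt 3 \<ge> (1.7::real)" by (rule real_le_rsqrt) (simp add: power2_eq_square)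
  moreover have "x/3 \<le> pi/6" using assms by simp
  moreover have "pi/6 \<le> (0.8::real)" using pi_less_4 by simp
  ultimately show ?thesis by linarith
qed

lemma norm_1_minus_e: "norm (1 - e t) = 2 * \<bar>sin (pi * t)\<bar>"
proof -
  have ee: "e t = Complex (cos (2*pi*t)) (sin (2*pi*t))"
    unfolding e_def using cis_conv_exp[of "2*pi*t"] by (simp add: cis.code mult.commute mult.left_commute)
  have "(norm (1 - e t))^2 = (1 - cos (2*pi*t))^2 + (sin (2*pi*t))^2"
    by (simp add: ee cmod_def)
  also have "\<dots> = 2 - 2 * cos (2*(pi*t))"
    using sin_cos_squared_add[of "2*pi*t"] by (simp add: power2_eq_square algebra_simps)
  also have "\<dots> = (2 * \<bar>sin (pi * t)\<bar>)^2"
    by (simp add: cos_double_sin power_mult_distrib)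
  finally show ?thesis by (rule power2_eq_imp_eq) auto
qed

lemma norm_1_minus_e_ge: "norm (1 - e c) \<ge> dint c"
proof -
  define t where "t = c - of_int (round c)"
  have "e c = e (t + of_int (round c))" unfolding t_def by simp
  hence "e c = e t" by (simp add: e_add)
  have tb: "\<bar>t\<bar> \<le> 1/2" unfolding t_def using of_int_round_abs_le[of c] by (simp add: abs_minus_commute)
  have "\<bar>sin (pi * t)\<bar> = sin (pi * \<bar>t\<bar>)"
  proof (cases "t \<ge> 0")
    case True thus ?thesis using tb by (subst abs_of_nonneg) (auto intro!: sin_ge_zero)
  next
    case False
    have "0 \<le> pi * - t" using False by (simp add: mult_nonneg_nonpos)
    moreover have "pi * - t \<le> pi * 1" using tb False by (intro mult_left_mono) auto
    ultimately have "sin (pi * (-t)) \<ge> 0" by (intro sin_ge_zero) auto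
    thus ?thesis using False by (simp add: abs_if)
  qed
  also have "\<dots> \<ge> pi * \<bar>t\<bar> / 3"
    using tb by (intro sin_ge_half) (auto simp: mult_nonneg_nonneg)
  finally have "\<bar>sin (pi * t)\<bar> \<ge> pi * \<bar>t\<bar> / 3" .
  moreover have "pi * \<bar>t\<bar> \<ge> 2 * \<bar>t\<bar>" using pi_ge_two by (intro mult_right_mono) auto
  ultimately have "\<bar>t\<bar> \<le> 2 * \<bar>sin (pi * t)\<bar>" by linarith
  thus ?thesis using norm_1_minus_e[of t] \<open>e c = e t\<close>
    unfolding dint_def t_def by simp
qed

lemma lin_sum_geo:
  fixes a b :: int and g :: real
  assumes "dint c > 0"
  shows "norm (\<Sum>x\<in>{a..b}. e (c * of_int x + g)) \<le> 2 / dint c"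
proof -
  define n where "n = nat (b - a + 1)"
  have img: "{a..b} = (\<lambda>i. a + int i) ` {..<n}"
  proof
    show "{a..b} \<subseteq> (\<lambda>i. a + int i) ` {..<n}"
    proof
      fix x assume "x \<in> {a..b}"
      hence "x = a + int (nat (x - a))" "nat (x - a) < n" unfolding n_def by auto
      thus "x \<in> (\<lambda>i. a + int i) ` {..<n}" by blast
    qed
  qed (auto simp: n_def)
  have "(\<Sum>x\<in>{a..b}. e (c * of_int x + g)) = (\<Sum>i<n. e (c * of_int (a + int i) + g))"
    unfolding img by (subst sum.reindex) (auto simp: inj_on_def)
  also have "\<dots> = (\<Sum>i<n. e (c * of_int a + g) * e c ^ i)"
    by (intro sum.cong refl) (simp add: e_add[symmetric] e_nat_mult[symmetric] algebra_simps)
  also have "\<dots> = e (c * of_int a + g) * (\<Sum>i<n. e c ^ i)"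
    by (simp add: sum_distrib_left)
  finally have eq: "(\<Sum>x\<in>{a..b}. e (c * of_int x + g)) = e (c * of_int a + g) * (\<Sum>i<n. e c ^ i)" .
  have pos: "norm (1 - e c) \<ge> dint c" by (rule norm_1_minus_e_ge)
  hence ne: "1 - e c \<noteq> 0" using assms by auto
  have "(1 - e c) * (\<Sum>i<n. e c ^ i) = 1 - e c ^ n" by (simp add: one_diff_power_eq)
  hence "norm (1 - e c) * norm (\<Sum>i<n. e c ^ i) = norm (1 - e c ^ n)" by (metis norm_mult)
  also have "\<dots> \<le> 2" using norm_triangle_ineq4[of 1 "e c ^ n"] by (simp add: norm_power)
  finally have "norm (1 - e c) * norm (\<Sum>i<n. e c ^ i) \<le> 2" .
  hence "dint c * norm (\<Sum>i<n. e c ^ i) \<le> 2"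
    using pos by (meson mult_right_mono norm_ge_zero order_trans)
  hence "norm (\<Sum>i<n. e c ^ i) \<le> 2 / dint c" using assms by (simp add: field_simps)
  thus ?thesis unfolding eq by (simp add: norm_mult)
qed

definition Lb :: "nat \<Rightarrow> real \<Rightarrow> real" where
  "Lb N c = (if dint c = 0 then real N else min (real N) (2 / dint c))"

lemma Lb_le_N: "Lb N c \<le> real N" unfolding Lb_def by auto

lemma Lb_nonneg: "Lb N c \<ge> 0" unfolding Lb_def using dint_nonneg[of c] by auto

lemma Lb_minus: "Lb N (- c) = Lb N c" unfolding Lb_def by (simp add: dint_minus)

lemma lin_sum_bound:
  fixes a b :: int and g :: real
  assumes "{a..b} \<subseteq> {1..int N}"
  shows "norm (\<Sum>x\<in>{a..b}. e (c * of_int x + g)) \<le> Lb N c"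
proof -
  have "norm (\<Sum>x\<in>{a..b}. e (c * of_int x + g)) \<le> (\<Sum>x\<in>{a..b}. norm (e (c * of_int x + g)))"
    by (rule norm_sum)
  also have "\<dots> = real (card {a..b})" by simp
  also have "\<dots> \<le> real (card {1..int N})" using assms by (intro of_nat_mono card_mono) auto
  also have "\<dots> = real N" by simp
  finally have c1: "norm (\<Sum>x\<in>{a..b}. e (c * of_int x + g)) \<le> real N" .
  show ?thesis
  proof (cases "dint c = 0")
    case True thus ?thesis using c1 unfolding Lb_def by simp
  next
    case False
    hence "dint c > 0" using dint_nonneg[of c] by simp
    thus ?thesis using c1 lin_sum_geo[where c=c and a=a and b=b and g=g] unfolding Lb_def by simp
  qed
qed

fun diffs :: "int list \<Rightarrow> (int \<Rightarrow> real) \<Rightarrow> int \<Rightarrow> real" where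
  "diffs [] \<phi> = \<phi>"
| "diffs (h # hs) \<phi> = diffs hs (\<lambda>x. \<phi> (x + h) - \<phi> x)"

definition Hl :: "nat \<Rightarrow> nat \<Rightarrow> int list set" where
  "Hl N j = {hs. set hs \<subseteq> {- int N..int N} \<and> length hs = j}"

lemma finite_Hl: "finite (Hl N j)"
  unfolding Hl_def by (rule finite_lists_length_eq) simp

lemma card_Hl: "card (Hl N j) = (2 * N + 1) ^ j"
  unfolding Hl_def by (simp add: card_lists_length_eq) (simp add: nat_add_distrib nat_mult_distrib)

lemma sum_Hl_Suc:
  "(\<Sum>hs\<in>Hl N (Suc j). F hs) = (\<Sum>h\<in>{- int N..int N}. \<Sum>hs\<in>Hl N j. F (h # hs))"
proof -
  have img: "Hl N (Suc j) = (\<lambda>(h, hs). h # hs) ` ({- int N..int N} \<times> Hl N j)"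
  proof
    show "Hl N (Suc j) \<subseteq> (\<lambda>(h, hs). h # hs) ` ({- int N..int N} \<times> Hl N j)"
    proof
      fix xs assume "xs \<in> Hl N (Suc j)"
      then obtain h hs where "xs = h # hs" "h \<in> {- int N..int N}" "hs \<in> Hl N j"
        unfolding Hl_def by (cases xs) auto
      thus "xs \<in> (\<lambda>(h, hs). h # hs) ` ({- int N..int N} \<times> Hl N j)" by force
    qed
  qed (auto simp: Hl_def)
  have "(\<Sum>hs\<in>Hl N (Suc j). F hs) = (\<Sum>p\<in>{- int N..int N} \<times> Hl N j. F (fst p # snd p))"
    unfolding img by (subst sum.reindex) (auto simp: inj_on_def case_prod_beta)
  also have "\<dots> = (\<Sum>h\<in>{- int N..int N}. \<Sum>hs\<in>Hl N j. F (h # hs))"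
    unfolding sum.cartesian_product by (simp add: case_prod_beta)
  finally show ?thesis .
qed

lemma power_mean_2pow:
  fixes g :: "'a \<Rightarrow> real"
  assumes "\<And>x. x \<in> A \<Longrightarrow> g x \<ge> 0"
  shows "(\<Sum>x\<in>A. g x) ^ (2^j) \<le> real (card A) ^ (2^j - 1) * (\<Sum>x\<in>A. g x ^ (2^j))"
proof (induction j)
  case 0 thus ?case by simp
next
  case (Suc j)
  have "(\<Sum>x\<in>A. g x) ^ (2^Suc j) = ((\<Sum>x\<in>A. g x) ^ (2^j))^2"
    by (simp add: power_mult[symmetric] mult.commute)
  also have "\<dots> \<le> (real (card A) ^ (2^j - 1) * (\<Sum>x\<in>A. g x ^ (2^j)))^2"
    using Suc assms by (intro power_mono) (auto intro!: zero_le_power sum_nonneg)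
  also have "\<dots> = real (card A) ^ (2 * (2^j - 1)) * (\<Sum>x\<in>A. g x ^ (2^j))^2"
    by (simp add: power_mult_distrib mult.commute flip: power_mult)
  also have "\<dots> \<le> real (card A) ^ (2 * (2^j - 1)) * ((\<Sum>x\<in>A. (g x ^ (2^j))^2) * real (card A))"
    by (intro mult_left_mono sum_squared_le_sum_of_squares) auto
  also have "\<dots> = real (card A) ^ (2^Suc j - 1) * (\<Sum>x\<in>A. g x ^ (2^Suc j))"
  proof -
    have "2 * (2^j - 1) + 1 = (2::nat)^Suc j - 1"
      using one_le_power[of "2::nat" j] by (simp only: power_Suc) linarith
    hence "real (card A) ^ (2 * (2^j - 1)) * real (card A) = real (card A) ^ (2^Suc j - 1)"
      by (metis power_Suc2 Suc_eq_plus1)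
    moreover have "\<And>x. (g x ^ (2^j))^2 = g x ^ (2^Suc j)"
      by (simp add: power_mult[symmetric] mult.commute)
    ultimately show ?thesis by (simp add: algebra_simps)
  qed
  finally show ?case .
qed

lemma diff_step:
  fixes \<phi> :: "int \<Rightarrow> real" and a b :: int
  assumes "{a..b} \<subseteq> {1..int N}"
  shows "(norm (\<Sum>x\<in>{a..b}. e (\<phi> x)))^2 \<le>
    (\<Sum>h\<in>{- int N..int N}. norm (\<Sum>x\<in>{max a (a-h)..min b (b-h)}. e (\<phi> (x + h) - \<phi> x)))"
proof -
  let ?I = "{a..b}" and ?H = "{- int N..int N}"
  define S where "S = (\<Sum>x\<in>?I. e (\<phi> x))"
  have inner: "(\<Sum>y\<in>?I. e (\<phi> y - \<phi> x)) =
      (\<Sum>h\<in>?H. if x + h \<in> ?I then e (\<phi> (x + h) - \<phi> x) else 0)" if x: "x \<in> ?I" for x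
  proof -
    have "(\<Sum>h\<in>?H. if x + h \<in> ?I then e (\<phi> (x + h) - \<phi> x) else 0) =
        (\<Sum>h\<in>{h\<in>?H. x + h \<in> ?I}. e (\<phi> (x + h) - \<phi> x))"
      by (rule sum.inter_filter[symmetric]) simp
    also have "\<dots> = (\<Sum>y\<in>(\<lambda>h. x + h) ` {h\<in>?H. x + h \<in> ?I}. e (\<phi> y - \<phi> x))"
      by (subst sum.reindex) (auto simp: inj_on_def)
    also have "(\<lambda>h. x + h) ` {h\<in>?H. x + h \<in> ?I} = ?I"
    proof
      show "?I \<subseteq> (\<lambda>h. x + h) ` {h\<in>?H. x + h \<in> ?I}"
      proof
        fix y assume y: "y \<in> ?I"
        have "y - x \<in> {h\<in>?H. x + h \<in> ?I}" using x y assms by auto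
        thus "y \<in> (\<lambda>h. x + h) ` {h\<in>?H. x + h \<in> ?I}" by (intro image_eqI[of _ _ "y - x"]) auto
      qed
    qed auto
    finally show ?thesis by simp
  qed
  have "S * cnj S = (\<Sum>x\<in>?I. \<Sum>y\<in>?I. e (\<phi> y) * cnj (e (\<phi> x)))"
    unfolding S_def by (simp add: sum_product cnj_sum mult.commute, subst sum.swap, rule refl)
  also have "\<dots> = (\<Sum>x\<in>?I. \<Sum>y\<in>?I. e (\<phi> y - \<phi> x))" by (simp add: e_mult_cnj)
  also have "\<dots> = (\<Sum>x\<in>?I. \<Sum>h\<in>?H. if x + h \<in> ?I then e (\<phi> (x + h) - \<phi> x) else 0)"
    by (intro sum.cong refl inner)
  also have "\<dots> = (\<Sum>h\<in>?H. \<Sum>x\<in>?I. if x + h \<in> ?I then e (\<phi> (x + h) - \<phi> x) else 0)"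
    by (rule sum.swap)
  also have "\<dots> = (\<Sum>h\<in>?H. \<Sum>x\<in>{max a (a-h)..min b (b-h)}. e (\<phi> (x + h) - \<phi> x))"
  proof (rule sum.cong[OF refl])
    fix h
    have "{x\<in>?I. x + h \<in> ?I} = {max a (a-h)..min b (b-h)}" by auto
    moreover have "(\<Sum>x\<in>?I. if x + h \<in> ?I then e (\<phi> (x + h) - \<phi> x) else 0) =
        (\<Sum>x\<in>{x\<in>?I. x + h \<in> ?I}. e (\<phi> (x + h) - \<phi> x))"
      by (rule sum.inter_filter[symmetric]) simp
    ultimately show "(\<Sum>x\<in>?I. if x + h \<in> ?I then e (\<phi> (x + h) - \<phi> x) else 0) =
        (\<Sum>x\<in>{max a (a-h)..min b (b-h)}. e (\<phi> (x + h) - \<phi> x))"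
      by simp
  qed
  finally have eq: "S * cnj S = \<dots>" .
  have "(norm S)^2 = norm (S * cnj S)"
    by (simp add: norm_mult power2_eq_square)
  also have "\<dots> \<le> (\<Sum>h\<in>?H. norm (\<Sum>x\<in>{max a (a-h)..min b (b-h)}. e (\<phi> (x + h) - \<phi> x)))"
    unfolding eq by (rule norm_sum)
  finally show ?thesis unfolding S_def .
qed

lemma weyl_iter:
  fixes F :: "int list \<Rightarrow> real" and \<phi> :: "int \<Rightarrow> real" and a b :: int
  assumes "\<And>hs a' b'. hs \<in> Hl N j \<Longrightarrow> {a'..b'} \<subseteq> {1..int N} \<Longrightarrow>
              norm (\<Sum>x\<in>{a'..b'}. e (diffs hs \<phi> x)) \<le> F hs"
    and "{a..b} \<subseteq> {1..int N}"
  shows "(norm (\<Sum>x\<in>{a..b}. e (\<phi> x)))^(2^j)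
          \<le> real (2*N+1) ^ (2^j - j - 1) * (\<Sum>hs\<in>Hl N j. F hs)"
  using assms
proof (induction j arbitrary: \<phi> F a b)
  case 0
  have "Hl N 0 = {[]}" unfolding Hl_def by auto
  thus ?case using "0.prems"(1)[of "[]" a b] "0.prems"(2) by simp
next
  case (Suc j)
  let ?H = "{- int N..int N}"
  let ?c = "real (2*N+1)"
  define g where "g h = norm (\<Sum>x\<in>{max a (a-h)..min b (b-h)}. e (\<phi> (x + h) - \<phi> x))" for h
  have cardH: "card ?H = 2*N+1" by simp
  have g_nonneg: "g h \<ge> 0" for h unfolding g_def by simp
  have IH: "g h ^ (2^j) \<le> ?c ^ (2^j - j - 1) * (\<Sum>hs\<in>Hl N j. F (h # hs))" if h: "h \<in> ?H" for h
    unfolding g_def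
  proof (rule Suc.IH)
    show "{max a (a-h)..min b (b-h)} \<subseteq> {1..int N}" using Suc.prems(2) by auto
    fix hs a' b' assume "hs \<in> Hl N j" "{a'..b'} \<subseteq> {1..int N}"
    moreover have "h # hs \<in> Hl N (Suc j)" using \<open>hs \<in> Hl N j\<close> h unfolding Hl_def by auto
    ultimately show "norm (\<Sum>x\<in>{a'..b'}. e (diffs hs (\<lambda>x. \<phi> (x + h) - \<phi> x) x)) \<le> F (h # hs)"
      using Suc.prems(1)[of "h # hs" a' b'] by simp
  qed
  have "(norm (\<Sum>x\<in>{a..b}. e (\<phi> x)))^(2^Suc j) = ((norm (\<Sum>x\<in>{a..b}. e (\<phi> x)))^2)^(2^j)"
    by (simp add: power_mult[symmetric] mult.commute)
  also have "\<dots> \<le> (\<Sum>h\<in>?H. g h)^(2^j)"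
    unfolding g_def by (intro power_mono diff_step Suc.prems(2)) simp
  also have "\<dots> \<le> ?c ^ (2^j - 1) * (\<Sum>h\<in>?H. g h ^ (2^j))"
    using power_mean_2pow[of ?H g j] g_nonneg cardH by (simp add: add.commute)
  also have "\<dots> \<le> ?c ^ (2^j - 1) * (\<Sum>h\<in>?H. ?c ^ (2^j - j - 1) * (\<Sum>hs\<in>Hl N j. F (h # hs)))"
    by (intro mult_left_mono sum_mono IH) auto
  also have "\<dots> = ?c ^ (2^j - 1) * ?c ^ (2^j - j - 1) * (\<Sum>hs\<in>Hl N (Suc j). F hs)"
    by (simp add: sum_Hl_Suc sum_distrib_left mult.assoc)
  also have "?c ^ (2^j - 1) * ?c ^ (2^j - j - 1) = ?c ^ (2^Suc j - Suc j - 1)"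
  proof -
    have "j < 2^j" by (rule less_exp)
    hence "(2^j - 1) + (2^j - j - 1) = (2::nat)^Suc j - Suc j - 1" by (simp only: power_Suc)
    thus ?thesis by (simp add: power_add[symmetric])
  qed
  finally show ?case .
qed

definition low :: "nat \<Rightarrow> (int \<Rightarrow> real) \<Rightarrow> bool" where
  "low d \<psi> \<longleftrightarrow> (\<exists>g. \<forall>x. \<psi> x = (\<Sum>m<d. g m * of_int x ^ m))"

definition lead :: "nat \<Rightarrow> real \<Rightarrow> (int \<Rightarrow> real) \<Rightarrow> bool" where
  "lead d c \<psi> \<longleftrightarrow> low d (\<lambda>x. \<psi> x - c * of_int x ^ d)"

lemma low_mono: assumes "low d \<psi>" "d \<le> d'" shows "low d' \<psi>"
proof -
  obtain g where g: "\<And>x. \<psi> x = (\<Sum>m<d. g m * of_int x ^ m)" using assms unfolding low_def by blast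
  define G where "G m = (if m < d then g m else 0)" for m
  have "\<psi> x = (\<Sum>m<d'. G m * of_int x ^ m)" for x
  proof -
    have "(\<Sum>m<d'. G m * of_int x ^ m) = (\<Sum>m<d. G m * (of_int x::real) ^ m)"
      using assms(2) by (intro sum.mono_neutral_right) (auto simp: G_def)
    thus ?thesis by (simp add: g G_def)
  qed
  note hG = this
  show ?thesis unfolding low_def by (intro exI[of _ G] allI) (rule hG)
qed

lemma low_add: assumes "low d \<psi>" "low d \<chi>" shows "low d (\<lambda>x. \<psi> x + \<chi> x)"
proof -
  obtain g where g: "\<And>x. \<psi> x = (\<Sum>m<d. g m * of_int x ^ m)" using assms unfolding low_def by blast
  obtain g' where g': "\<And>x. \<chi> x = (\<Sum>m<d. g' m * of_int x ^ m)" using assms unfolding low_def by blast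
  define G where "G m = g m + g' m" for m
  have "\<psi> x + \<chi> x = (\<Sum>m<d. G m * of_int x ^ m)" for x
    by (simp add: g g' G_def sum.distrib[symmetric] algebra_simps)
  note hG = this
  show ?thesis unfolding low_def by (intro exI[of _ G] allI) (rule hG)
qed

lemma low_cmult: assumes "low d \<psi>" shows "low d (\<lambda>x. c * \<psi> x)"
proof -
  obtain g where g: "\<And>x. \<psi> x = (\<Sum>m<d. g m * of_int x ^ m)" using assms unfolding low_def by blast
  define G where "G m = c * g m" for m
  have "c * \<psi> x = (\<Sum>m<d. G m * of_int x ^ m)" for x
    by (simp add: g G_def sum_distrib_left algebra_simps)
  note hG = this
  show ?thesis unfolding low_def by (intro exI[of _ G] allI) (rule hG)
qed

lemma low_zero: "low d (\<lambda>x. 0)"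
  unfolding low_def by (rule exI[of _ "\<lambda>_. 0"]) simp

lemma low_sum: assumes "finite S" "\<And>i. i \<in> S \<Longrightarrow> low d (f i)"
  shows "low d (\<lambda>x. \<Sum>i\<in>S. f i x)"
  using assms
proof (induction S rule: finite_induct)
  case empty thus ?case by (simp add: low_zero)
next
  case (insert i S)
  thus ?case by (simp add: low_add)
qed

lemma binom_shift:
  "(of_int x + of_int h :: real) ^ m = (\<Sum>k<m. of_nat (m choose k) * of_int h ^ (m - k) * of_int x ^ k) + of_int x ^ m"
proof -
  have "(of_int x + of_int h :: real) ^ m = (\<Sum>k\<le>m. of_nat (m choose k) * of_int x ^ k * of_int h ^ (m - k))"
    by (rule binomial_ring)
  also have "\<dots> = (\<Sum>k<m. of_nat (m choose k) * of_int x ^ k * of_int h ^ (m - k)) + of_int x ^ m"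
    by (simp add: lessThan_Suc_atMost[symmetric])
  finally show ?thesis by (simp add: algebra_simps)
qed

lemma low_shift_pow: "low m (\<lambda>x. (of_int x + of_int h) ^ m - of_int x ^ m)"
  unfolding low_def
  by (rule exI[of _ "\<lambda>k. of_nat (m choose k) * of_int h ^ (m - k)"]) (simp add: binom_shift)

lemma lead_shift_pow:
  assumes "d \<ge> 1"
  shows "low (d - 1) (\<lambda>x. (of_int (x + h)) ^ d - of_int x ^ d - of_nat d * of_int h * of_int x ^ (d - 1))"
proof -
  obtain e where d: "d = Suc e" using assms by (cases d) auto
  have "(of_int (x + h) :: real) ^ d - of_int x ^ d - of_nat d * of_int h * of_int x ^ (d - 1)
      = (\<Sum>k<e. of_nat (d choose k) * of_int h ^ (d - k) * of_int x ^ k)" for x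
    using binom_shift[of x h d] unfolding d by (simp add: algebra_simps)
  hence "\<exists>g. \<forall>x. (of_int (x + h) :: real) ^ d - of_int x ^ d - of_nat d * of_int h * of_int x ^ (d - 1)
      = (\<Sum>k<d-1. g k * of_int x ^ k)" using d by auto
  thus ?thesis unfolding low_def .
qed

lemma low_diff: assumes "low d \<psi>" shows "low (d - 1) (\<lambda>x. \<psi> (x + h) - \<psi> x)"
proof -
  obtain g where g: "\<And>x. \<psi> x = (\<Sum>m<d. g m * of_int x ^ m)" using assms unfolding low_def by blast
  have eq: "(\<lambda>x. \<psi> (x + h) - \<psi> x) = (\<lambda>x. \<Sum>m<d. g m * ((of_int (x + h)) ^ m - of_int x ^ m))"
    by (rule ext) (simp add: g sum_subtractf[symmetric] algebra_simps)
  show ?thesis unfolding eq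
    by (intro low_sum low_cmult) (auto intro: low_mono[OF low_shift_pow])
qed

lemma lead_diff:
  assumes "lead d c \<psi>" "d \<ge> 1"
  shows "lead (d - 1) (c * of_nat d * of_int h) (\<lambda>x. \<psi> (x + h) - \<psi> x)"
proof -
  define L where "L x = \<psi> x - c * of_int x ^ d" for x
  have L: "low d L" using assms(1) unfolding lead_def L_def .
  have eq: "(\<lambda>x. \<psi> (x + h) - \<psi> x - c * of_nat d * of_int h * of_int x ^ (d - 1)) =
      (\<lambda>x. c * ((of_int (x + h)) ^ d - of_int x ^ d - of_nat d * of_int h * of_int x ^ (d - 1))
         + (L (x + h) - L x))"
    by (rule ext) (simp add: L_def algebra_simps)
  show ?thesis unfolding lead_def eq
    by (intro low_add low_cmult lead_shift_pow low_diff L assms(2))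
qed

lemma lead_diffs:
  assumes "lead d c \<psi>" "length hs \<le> d"
  shows "lead (d - length hs) (c * (\<Prod>i<length hs. real (d - i)) * (\<Prod>h\<leftarrow>hs. real_of_int h)) (diffs hs \<psi>)"
  using assms
proof (induction hs arbitrary: d c \<psi>)
  case Nil thus ?case by simp
next
  case (Cons h hs)
  have d: "d \<ge> 1" using Cons.prems by simp
  have "lead (d - 1) (c * of_nat d * of_int h) (\<lambda>x. \<psi> (x + h) - \<psi> x)"
    by (rule lead_diff[OF Cons.prems(1) d])
  from Cons.IH[OF this] Cons.prems(2)
  have "lead (d - 1 - length hs) (c * of_nat d * of_int h * (\<Prod>i<length hs. real (d - 1 - i)) * (\<Prod>h\<leftarrow>hs. real_of_int h))
     (diffs hs (\<lambda>x. \<psi> (x + h) - \<psi> x))" by simp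
  moreover have "(\<Prod>i<length (h # hs). real (d - i)) = of_nat d * (\<Prod>i<length hs. real (d - 1 - i))"
    by (simp only: length_Cons prod.lessThan_Suc_shift) simp
  ultimately show ?case by (simp add: algebra_simps)
qed

lemma lead1: assumes "lead 1 c \<psi>" shows "\<psi> x = c * of_int x + \<psi> 0"
proof -
  obtain g where g: "\<And>x. \<psi> x - c * of_int x ^ 1 = (\<Sum>m<1. g m * of_int x ^ m)"
    using assms unfolding lead_def low_def by blast
  from g[of x] g[of 0] show ?thesis by simp
qed

lemma lead_mono: "lead d c (\<lambda>x. c * of_int x ^ d)"
  unfolding lead_def by (simp add: low_zero)

definition Kc :: "nat \<Rightarrow> nat" where "Kc k = (\<Prod>i<k-1. (k - i))"

lemma Kc_pos: "Kc k \<ge> 1"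
proof -
  have "0 < (\<Prod>i<k-1. (k - i))" by (rule prod_pos) auto
  thus ?thesis unfolding Kc_def by linarith
qed

lemma weyl_bound:
  assumes "k \<ge> 1"
  shows "(norm (\<Sum>x\<in>{1..int N}. e (\<beta> * of_int x ^ k)))^(2^(k-1))
     \<le> real (2*N+1) ^ (2^(k-1) - k) * (\<Sum>hs\<in>Hl N (k-1). Lb N (\<beta> * real (Kc k) * (\<Prod>h\<leftarrow>hs. real_of_int h)))"
proof -
  have ex: "2^(k-1) - (k-1) - 1 = 2^(k-1) - k" using assms by simp
  have "(norm (\<Sum>x\<in>{1..int N}. e (\<beta> * of_int x ^ k)))^(2^(k-1))
     \<le> real (2*N+1) ^ (2^(k-1) - (k-1) - 1) * (\<Sum>hs\<in>Hl N (k-1). Lb N (\<beta> * real (Kc k) * (\<Prod>h\<leftarrow>hs. real_of_int h)))"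
  proof (rule weyl_iter)
    fix hs a' b' assume hs: "hs \<in> Hl N (k-1)" and ab: "{a'..b'} \<subseteq> {1..int N}"
    have len: "length hs = k - 1" using hs unfolding Hl_def by auto
    have "lead (k - length hs) (\<beta> * (\<Prod>i<length hs. real (k - i)) * (\<Prod>h\<leftarrow>hs. real_of_int h))
        (diffs hs (\<lambda>x. \<beta> * of_int x ^ k))"
      using len by (intro lead_diffs lead_mono) auto
    moreover have "k - length hs = 1" using len assms by simp
    moreover have "(\<Prod>i<length hs. real (k - i)) = real (Kc k)" unfolding Kc_def len by simp
    ultimately have L: "lead 1 (\<beta> * real (Kc k) * (\<Prod>h\<leftarrow>hs. real_of_int h)) (diffs hs (\<lambda>x. \<beta> * of_int x ^ k))"
      by simp
    show "norm (\<Sum>x\<in>{a'..b'}. e (diffs hs (\<lambda>x. \<beta> * of_int x ^ k) x))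
        \<le> Lb N (\<beta> * real (Kc k) * (\<Prod>h\<leftarrow>hs. real_of_int h))"
      by (subst lead1[OF L]) (rule lin_sum_bound[OF ab])
  qed simp
  thus ?thesis unfolding ex .
qed

definition tau :: "nat \<Rightarrow> nat" where "tau n = card {d. d dvd n}"

lemma div_gcd_dvd_other:
  fixes d a b :: nat
  assumes "d dvd a * b" "a > 0"
  shows "d div gcd d a dvd b"
proof -
  define g where "g = gcd d a"
  have gpos: "g > 0" using assms unfolding g_def by simp
  obtain d1 where d1: "d = g * d1" unfolding g_def by (metis gcd_dvd1 dvdE)
  obtain a1 where a1: "a = g * a1" unfolding g_def by (metis gcd_dvd2 dvdE)
  have cop: "coprime (d div g) (a div g)" unfolding g_def using assms by (intro div_gcd_coprime) auto
  have "d div g = d1" "a div g = a1" using d1 a1 gpos by auto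
  hence cop': "coprime d1 a1" using cop by simp
  have "g * d1 dvd g * (a1 * b)" using assms(1) d1 a1 by (simp add: mult.assoc)
  hence "d1 dvd a1 * b" using gpos by simp
  hence "d1 dvd b" using cop' by (simp add: coprime_dvd_mult_right_iff)
  thus ?thesis using \<open>d div g = d1\<close> unfolding g_def by simp
qed

lemma tau_mult_le:
  fixes a b :: nat
  assumes "a > 0" "b > 0"
  shows "tau (a * b) \<le> tau a * tau b"
proof -
  let ?f = "\<lambda>d. (gcd d a, d div gcd d a)"
  have "inj_on ?f {d. d dvd a * b}"
  proof (rule inj_onI)
    fix x y assume "x \<in> {d. d dvd a * b}" "y \<in> {d. d dvd a * b}" "?f x = ?f y"
    hence "gcd x a = gcd y a" "x div gcd x a = y div gcd y a" by auto
    moreover have "x = gcd x a * (x div gcd x a)" "y = gcd y a * (y div gcd y a)" by simp_all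
    ultimately show "x = y" by metis
  qed
  moreover have "?f ` {d. d dvd a * b} \<subseteq> {d. d dvd a} \<times> {d. d dvd b}"
    using div_gcd_dvd_other assms by auto
  moreover have "finite ({d. d dvd a} \<times> {d. d dvd b})" using assms by auto
  ultimately have "card {d. d dvd a * b} \<le> card ({d. d dvd a} \<times> {d. d dvd b})"
    by (rule card_inj_on_le)
  thus ?thesis unfolding tau_def by (simp add: card_cartesian_product)
qed

lemma tau_prime_power:
  assumes "prime (p::nat)" shows "tau (p ^ j) \<le> j + 1"
proof -
  have "{d. d dvd p ^ j} \<subseteq> (\<lambda>i. p ^ i) ` {..j}"
    using divides_primepow_nat[OF assms] by auto
  hence "card {d. d dvd p ^ j} \<le> card ((\<lambda>i. p ^ i) ` {..j})" by (intro card_mono) auto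
  also have "\<dots> \<le> card {..j}" by (rule card_image_le) simp
  finally show ?thesis unfolding tau_def by simp
qed

lemma exp_lin_bound:
  fixes \<epsilon> :: real
  assumes "\<epsilon> > 0"
  shows "real j + 1 \<le> (1 + 1 / (\<epsilon> * ln 2)) * 2 powr (real j * \<epsilon>)"
proof -
  have l2: "ln (2::real) > 0" by simp
  have "2 powr (real j * \<epsilon>) = exp (real j * \<epsilon> * ln 2)" by (simp add: powr_def)
  also have "\<dots> \<ge> 1 + real j * \<epsilon> * ln 2" by (rule exp_ge_add_one_self)
  finally have h: "2 powr (real j * \<epsilon>) \<ge> 1 + real j * \<epsilon> * ln 2" .
  have "(1 + 1 / (\<epsilon> * ln 2)) * (1 + real j * \<epsilon> * ln 2) = 1 + real j * \<epsilon> * ln 2 + 1 / (\<epsilon> * ln 2) + real j"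
    using assms l2 by (simp add: field_simps)
  also have "\<dots> \<ge> real j + 1" using assms l2 by (simp add: mult_nonneg_nonneg)
  finally have "real j + 1 \<le> (1 + 1 / (\<epsilon> * ln 2)) * (1 + real j * \<epsilon> * ln 2)" .
  also have "\<dots> \<le> (1 + 1 / (\<epsilon> * ln 2)) * 2 powr (real j * \<epsilon>)"
    using h assms l2 by (intro mult_left_mono) auto
  finally show ?thesis .
qed

lemma divisor_bound:
  fixes \<epsilon> :: real
  assumes "\<epsilon> > 0"
  shows "\<exists>C>0. \<forall>n::nat. n \<ge> 1 \<longrightarrow> real (tau n) \<le> C * real n powr \<epsilon>"
proof -
  define T :: real where "T = 2 powr (1 / \<epsilon>)"
  define c0 :: real where "c0 = 1 + 1 / (\<epsilon> * ln 2)"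
  have c0: "c0 \<ge> 1" unfolding c0_def using assms by simp
  define S where "S n = {p::nat. prime p \<and> p dvd n \<and> real p < T}" for n
  have finS: "finite (S n)" if "n \<ge> 1" for n
  proof (rule finite_subset[of _ "{..n}"])
    show "S n \<subseteq> {..n}" using that unfolding S_def by (auto intro: dvd_imp_le)
  qed simp
  have small: "real j + 1 \<le> c0 * real p powr (real j * \<epsilon>)" if "p \<ge> 2" for p j :: nat
  proof -
    have "real j + 1 \<le> c0 * 2 powr (real j * \<epsilon>)" unfolding c0_def by (rule exp_lin_bound[OF assms])
    also have "\<dots> \<le> c0 * real p powr (real j * \<epsilon>)"
      using that c0 assms by (intro mult_left_mono powr_mono2) auto
    finally show ?thesis .
  qed
  have big: "real j + 1 \<le> real p powr (real j * \<epsilon>)" if "real p \<ge> T" for p j :: nat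
  proof -
    have "real j + 1 \<le> 2 ^ j" by (induction j) auto
    also have "(2::real) ^ j = T powr (real j * \<epsilon>)"
      unfolding T_def using assms by (simp add: powr_powr powr_realpow)
    also have "\<dots> \<le> real p powr (real j * \<epsilon>)"
      using that assms by (intro powr_mono2) (auto simp: T_def)
    finally show ?thesis .
  qed
  have main: "real (tau n) \<le> c0 ^ card (S n) * real n powr \<epsilon>" if "n \<ge> 1" for n
    using that
  proof (induction n rule: less_induct)
    case (less n)
    show ?case
    proof (cases "n = 1")
      case True
      have "c0 ^ card (S n) \<ge> 1" using c0 by simp
      moreover have "tau n = 1" using True unfolding tau_def by simp
      ultimately show ?thesis using True by simp
    next
      case False
      then obtain p where p: "prime p" "p dvd n" using prime_factor_nat by blast
      have n0: "n \<noteq> 0" using less.prems by simp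
      obtain y where y: "n = p ^ multiplicity p n * y" "\<not> p dvd y"
        using multiplicity_decompose'[OF n0] p(1) by (metis not_prime_unit)
      define j where "j = multiplicity p n"
      have ne: "n = p ^ j * y" using y j_def by simp
      have j1: "j \<ge> 1"
      proof (rule ccontr)
        assume "\<not> j \<ge> 1" hence "j = 0" by simp
        thus False using ne y(2) p(2) by simp
      qed
      have p2: "p \<ge> 2" using p(1) by (simp add: prime_ge_2_nat)
      have y1: "y \<ge> 1" using ne n0 by (cases y) auto
      have "p ^ 1 \<le> p ^ j" using p2 j1 by (intro power_increasing) auto
      hence "p ^ j \<ge> 2" using p2 by simp
      hence "2 * y \<le> p ^ j * y" by (intro mult_right_mono) auto
      hence ylt: "y < n" using ne y1 by linarith
      have IH: "real (tau y) \<le> c0 ^ card (S y) * real y powr \<epsilon>" using less.IH[OF ylt y1] .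
      have tn: "real (tau n) \<le> (real j + 1) * real (tau y)"
      proof -
        have "tau n \<le> tau (p ^ j) * tau y" unfolding ne using p2 y1 by (intro tau_mult_le) auto
        also have "\<dots> \<le> (j + 1) * tau y" using tau_prime_power[OF p(1)] by (intro mult_right_mono) auto
        finally have "tau n \<le> (j + 1) * tau y" .
        hence "real (tau n) \<le> real ((j + 1) * tau y)" by (rule of_nat_mono)
        thus ?thesis by (simp add: algebra_simps)
      qed
      have Ssub: "S y \<subseteq> S n" unfolding S_def ne by auto
      have pnot: "p \<notin> S y" unfolding S_def using y(2) by auto
      have npow: "real n powr \<epsilon> = real p powr (real j * \<epsilon>) * real y powr \<epsilon>"
        unfolding ne using p2 by (simp add: powr_mult powr_realpow[symmetric] powr_powr mult.commute)
      show ?thesis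
      proof (cases "real p < T")
        case True
        have "p \<in> S n" unfolding S_def using True p by simp
        hence "card (insert p (S y)) \<le> card (S n)" using Ssub finS[OF less.prems] by (intro card_mono) auto
        hence cS: "card (S y) + 1 \<le> card (S n)" using pnot finS[OF y1] by simp
        have "real (tau n) \<le> (c0 * real p powr (real j * \<epsilon>)) * (c0 ^ card (S y) * real y powr \<epsilon>)"
          using order_trans[OF tn mult_mono[OF small[OF p2, of j] IH]] c0 by simp
        also have "\<dots> = c0 ^ (card (S y) + 1) * real n powr \<epsilon>" unfolding npow by (simp add: algebra_simps)
        also have "\<dots> \<le> c0 ^ card (S n) * real n powr \<epsilon>"
          using cS c0 by (intro mult_right_mono power_increasing) auto
        finally show ?thesis .
      next
        case False
        have cS: "card (S y) \<le> card (S n)" using Ssub finS[OF less.prems] by (intro card_mono) auto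
        have "real (tau n) \<le> (real p powr (real j * \<epsilon>)) * (c0 ^ card (S y) * real y powr \<epsilon>)"
          using order_trans[OF tn mult_mono[OF big[of p j] IH]] False by simp
        also have "\<dots> = c0 ^ card (S y) * real n powr \<epsilon>" unfolding npow by (simp add: algebra_simps)
        also have "\<dots> \<le> c0 ^ card (S n) * real n powr \<epsilon>"
          using cS c0 by (intro mult_right_mono power_increasing) auto
        finally show ?thesis .
      qed
    qed
  qed
  define C where "C = c0 ^ (nat \<lceil>T\<rceil>)"
  have "real (tau n) \<le> C * real n powr \<epsilon>" if "n \<ge> 1" for n
  proof -
    have "S n \<subseteq> {..<nat \<lceil>T\<rceil>}"
    proof
      fix p assume "p \<in> S n"
      hence "real p < T" unfolding S_def by simp
      hence "real p < real_of_int \<lceil>T\<rceil>" by linarith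
      hence "int p < \<lceil>T\<rceil>" by linarith
      thus "p \<in> {..<nat \<lceil>T\<rceil>}" by simp
    qed
    hence "card (S n) \<le> card {..<nat \<lceil>T\<rceil>}" by (intro card_mono) auto
    hence "card (S n) \<le> nat \<lceil>T\<rceil>" by simp
    hence "c0 ^ card (S n) \<le> C" unfolding C_def using c0 by (intro power_increasing) auto
    hence "c0 ^ card (S n) * real n powr \<epsilon> \<le> C * real n powr \<epsilon>" by (intro mult_right_mono) auto
    thus ?thesis using main[OF that] by linarith
  qed
  moreover have "C > 0" unfolding C_def using c0 by simp
  ultimately show ?thesis by blast
qed

definition Dq :: "nat \<Rightarrow> int \<Rightarrow> int" where "Dq q v = min v (int q - 1 - v)"

lemma dint_floor_mod:
  fixes y :: real and q :: nat
  assumes "q \<ge> 1"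
  shows "dint (y / real q) \<ge> real_of_int (Dq q (\<lfloor>y\<rfloor> mod int q)) / real q"
proof -
  define m where "m = round (y / real q)"
  define z where "z = \<lfloor>y\<rfloor>"
  define s where "s = z mod int q"
  define M where "M = z div int q"
  have zM: "z = int q * M + s" unfolding s_def M_def by simp
  have s0: "0 \<le> s" "s < int q" unfolding s_def using assms by auto
  have yz: "real_of_int z \<le> y" "y < real_of_int z + 1" unfolding z_def by linarith+
  have qpos: "real q > 0" using assms by simp
  have key: "\<bar>y - real q * real_of_int m\<bar> \<ge> real_of_int (Dq q s)"
  proof (cases "m \<le> M")
    case True
    have "int q * m \<le> int q * M" using True by (intro mult_left_mono) auto
    hence "real_of_int (int q * m) \<le> real_of_int (int q * M)" by (simp only: of_int_le_iff)
    hence "y - real q * real_of_int m \<ge> real_of_int s" using zM yz by (simp add: algebra_simps)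
    moreover have "Dq q s \<le> s" unfolding Dq_def by simp
    ultimately show ?thesis by (smt (verit) of_int_le_iff)
  next
    case False
    hence "m \<ge> M + 1" by simp
    hence "int q * m \<ge> int q * (M + 1)" by (intro mult_left_mono) auto
    hence "real_of_int (int q * m) \<ge> real_of_int (int q * (M + 1))" by (simp only: of_int_le_iff)
    hence "real q * real_of_int m - y > real_of_int (int q - 1 - s)" using zM yz by (simp add: algebra_simps)
    moreover have "Dq q s \<le> int q - 1 - s" unfolding Dq_def by simp
    ultimately show ?thesis by (smt (verit) of_int_le_iff)
  qed
  have "dint (y / real q) = \<bar>y / real q - real_of_int m\<bar>" unfolding dint_def m_def by simp
  also have "\<dots> = \<bar>y - real q * real_of_int m\<bar> / real q" using qpos by (simp add: field_simps abs_divide)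
  finally show ?thesis using key qpos unfolding s_def z_def by (simp add: divide_right_mono)
qed

lemma Dq_shift:
  fixes z e :: int and q :: nat
  assumes "q \<ge> 1" "\<bar>e\<bar> \<le> 1"
  shows "Dq q (z mod int q) \<ge> Dq q ((z - e) mod int q) - 1"
proof -
  define t where "t = (z - e) mod int q"
  have t0: "0 \<le> t" "t < int q" unfolding t_def using assms by auto
  have zt: "z mod int q = (t + e) mod int q" unfolding t_def by (simp add: mod_add_left_eq)
  consider "e = 0" | "e = 1" | "e = -1" using assms(2) by linarith
  thus ?thesis
  proof cases
    case 1 thus ?thesis unfolding zt t_def by simp
  next
    case 2
    show ?thesis
    proof (cases "t = int q - 1")
      case True
      hence "(t + e) mod int q = 0" using 2 by simp
      thus ?thesis unfolding zt t_def[symmetric] using True assms(1) by (simp add: Dq_def)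
    next
      case False
      hence "(t + e) mod int q = t + 1" unfolding 2 using t0 by (intro mod_pos_pos_trivial) auto
      thus ?thesis unfolding zt t_def[symmetric] using assms(1) t0 by (simp add: Dq_def min_def)
    qed
  next
    case 3
    show ?thesis
    proof (cases "t = 0")
      case True
      hence "(t + e) mod int q = int q - 1" using 3 assms(1) by (simp add: zmod_minus1)
      thus ?thesis unfolding zt t_def[symmetric] using True assms(1) by (simp add: Dq_def)
    next
      case False
      hence "(t + e) mod int q = t - 1" unfolding 3 using t0 mod_pos_pos_trivial[of "t - 1" "int q"] by simp
      thus ?thesis unfolding zt t_def[symmetric] using assms(1) t0 by (simp add: Dq_def min_def)
    qed
  qed
qed

lemma harm_nat_bound: "m \<ge> 1 \<Longrightarrow> (\<Sum>i=1..m. 1 / real i) \<le> 1 + ln (real m)"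
proof (induction m rule: dec_induct)
  case base thus ?case by simp
next
  case (step n)
  have n1: "real n \<ge> 1" using step.hyps by simp
  have "ln (real n / real (Suc n)) \<le> real n / real (Suc n) - 1"
    using n1 by (intro ln_le_minus_one) auto
  also have "\<dots> = - (1 / real (Suc n))" by (simp add: field_simps)
  finally have "1 / real (Suc n) \<le> ln (real (Suc n)) - ln (real n)"
    using n1 by (simp add: ln_div)
  thus ?case using step.IH by simp
qed

lemma harm_int_bound:
  assumes "m \<ge> 1"
  shows "(\<Sum>i\<in>{1..int m}. 1 / real_of_int i) \<le> 1 + ln (real m)"
proof -
  have "{1..int m} = int ` {1..m}" by (simp add: image_int_atLeastAtMost)
  hence "(\<Sum>i\<in>{1..int m}. 1 / real_of_int i) = (\<Sum>i=1..m. 1 / real i)"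
    by (simp add: sum.reindex)
  thus ?thesis using harm_nat_bound[OF assms] by simp
qed

definition gq :: "nat \<Rightarrow> nat \<Rightarrow> int \<Rightarrow> real" where
  "gq N q t = (if Dq q t \<ge> 2 then 2 * real q / real_of_int (Dq q t - 1) else real N)"

lemma gq_sum:
  assumes "q \<ge> 1"
  shows "(\<Sum>t\<in>{0..<int q}. gq N q t) \<le> 4 * real N + 4 * real q * (1 + ln (real q))"
proof -
  define h1 where "h1 t = (if t \<ge> 2 then 1 / real_of_int (t - 1) else 0)" for t :: int
  define h2 where "h2 t = h1 (int q - 1 - t)" for t
  define ind where "ind t = (if Dq q t < 2 then 1 else 0 :: real)" for t
  have pt: "gq N q t \<le> real N * ind t + 2 * real q * (h1 t + h2 t)" if t: "t \<in> {0..<int q}" for t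
  proof (cases "Dq q t \<ge> 2")
    case True
    have a: "t \<ge> 2" "int q - 1 - t \<ge> 2" using True unfolding Dq_def by auto
    have "1 / real_of_int (Dq q t - 1) \<le> h1 t + h2 t"
    proof (cases "t \<le> int q - 1 - t")
      case True
      hence "Dq q t = t" unfolding Dq_def by simp
      moreover have "h2 t \<ge> 0" unfolding h2_def h1_def by simp
      ultimately show ?thesis using a unfolding h1_def by simp
    next
      case False
      hence "Dq q t = int q - 1 - t" unfolding Dq_def by simp
      moreover have "h1 t \<ge> 0" unfolding h1_def by simp
      ultimately show ?thesis using a unfolding h2_def h1_def by simp
    qed
    hence "2 * real q * (1 / real_of_int (Dq q t - 1)) \<le> 2 * real q * (h1 t + h2 t)"
      by (intro mult_left_mono) auto
    thus ?thesis using True unfolding gq_def ind_def by simp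
  next
    case False
    have "h1 t \<ge> 0" "h2 t \<ge> 0" unfolding h2_def h1_def by simp_all
    thus ?thesis using False unfolding gq_def ind_def by simp
  qed
  have s_ind: "(\<Sum>t\<in>{0..<int q}. ind t) \<le> 4"
  proof -
    have "(\<Sum>t\<in>{0..<int q}. ind t) = (\<Sum>t\<in>{t\<in>{0..<int q}. Dq q t < 2}. 1)"
      unfolding ind_def by (rule sum.inter_filter[symmetric]) simp
    also have "\<dots> = real (card {t\<in>{0..<int q}. Dq q t < 2})" by simp
    also have "card {t\<in>{0..<int q}. Dq q t < 2} \<le> card {0, 1, int q - 2, int q - 1}"
      by (intro card_mono) (auto simp: Dq_def)
    also have "\<dots> \<le> 4"
    proof -
      have "{0, 1, int q - 2, int q - 1} = set [0, 1, int q - 2, int q - 1]" by simp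
      thus ?thesis using card_length[of "[0, 1, int q - 2, int q - 1]"] by simp
    qed
    finally show ?thesis by simp
  qed
  have s_h1: "(\<Sum>t\<in>{0..<int q}. h1 t) \<le> 1 + ln (real q)"
  proof -
    have "(\<Sum>t\<in>{0..<int q}. h1 t) = (\<Sum>t\<in>{2..<int q}. 1 / real_of_int (t - 1))"
      unfolding h1_def by (rule sum.mono_neutral_cong_right) auto
    also have "\<dots> = (\<Sum>i\<in>{1..<int q - 1}. 1 / real_of_int i)"
      by (rule sum.reindex_bij_witness[of _ "\<lambda>i. i + 1" "\<lambda>t. t - 1"]) auto
    also have "\<dots> \<le> (\<Sum>i\<in>{1..int q}. 1 / real_of_int i)"
      by (intro sum_mono2) auto
    also have "\<dots> \<le> 1 + ln (real q)" by (rule harm_int_bound[OF assms])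
    finally show ?thesis .
  qed
  have s_h2: "(\<Sum>t\<in>{0..<int q}. h2 t) = (\<Sum>t\<in>{0..<int q}. h1 t)"
    unfolding h2_def by (rule sum.reindex_bij_witness[of _ "\<lambda>t. int q - 1 - t" "\<lambda>t. int q - 1 - t"]) auto
  have "(\<Sum>t\<in>{0..<int q}. gq N q t) \<le> (\<Sum>t\<in>{0..<int q}. real N * ind t + 2 * real q * (h1 t + h2 t))"
    by (intro sum_mono pt)
  also have "\<dots> = real N * (\<Sum>t\<in>{0..<int q}. ind t) + 2 * real q * ((\<Sum>t\<in>{0..<int q}. h1 t) + (\<Sum>t\<in>{0..<int q}. h2 t))"
    by (simp add: sum.distrib sum_distrib_left distrib_left)
  also have "\<dots> \<le> real N * 4 + 2 * real q * ((1 + ln (real q)) + (1 + ln (real q)))"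
    using s_ind s_h1 s_h2 by (intro add_mono mult_left_mono) auto
  finally show ?thesis by (simp add: algebra_simps)
qed

lemma block_sum:
  fixes \<alpha> :: real and r n0 :: int and q :: nat
  assumes q1: "q \<ge> 1" and cop: "coprime r (int q)"
    and app: "\<bar>\<alpha> - real_of_int r / real q\<bar> \<le> 1 / (real q)^2"
  shows "(\<Sum>j<q. Lb N ((real_of_int n0 + real j) * \<alpha>)) \<le> 4 * real N + 4 * real q * (1 + ln (real q))"
proof -
  have qpos: "real q > 0" using q1 by simp
  define \<delta> where "\<delta> = \<alpha> - real_of_int r / real q"
  define a where "a = real q * (real_of_int n0 * \<alpha>)"
  define c where "c = \<lfloor>a\<rfloor>"
  define t where "t j = (c + int j * r) mod int q" for j :: nat
  have bound_j: "Lb N ((real_of_int n0 + real j) * \<alpha>) \<le> gq N q (t j)" if j: "j < q" for j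
  proof -
    define \<eta> where "\<eta> = real q * real j * \<delta>"
    have "\<bar>\<eta>\<bar> \<le> real q * real j * (1 / (real q)^2)"
      unfolding \<eta>_def \<delta>_def using mult_left_mono[OF app, of "real q * real j"] by (simp add: abs_mult)
    also have "\<dots> = real j / real q" using qpos by (simp add: field_simps power2_eq_square)
    also have "\<dots> < 1" using j qpos by simp
    finally have eta: "\<bar>\<eta>\<bar> < 1" .
    define y where "y = real q * ((real_of_int n0 + real j) * \<alpha>)"
    have ydef: "y = (a + \<eta>) + real_of_int (int j * r)"
      unfolding y_def a_def \<eta>_def \<delta>_def using qpos by (simp add: field_simps)
    define z where "z = \<lfloor>y\<rfloor>"
    have zdef: "z = \<lfloor>a + \<eta>\<rfloor> + int j * r" unfolding z_def ydef by (rule floor_add_int[symmetric])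
    define e where "e = \<lfloor>a + \<eta>\<rfloor> - c"
    have "\<lfloor>a - 1\<rfloor> \<le> \<lfloor>a + \<eta>\<rfloor>" using eta by (intro floor_mono) linarith
    moreover have "\<lfloor>a + \<eta>\<rfloor> \<le> \<lfloor>a + 1\<rfloor>" using eta by (intro floor_mono) linarith
    ultimately have e1: "\<bar>e\<bar> \<le> 1" unfolding e_def c_def by simp
    have zt: "z - e = c + int j * r" unfolding zdef e_def by simp
    have D1: "Dq q (z mod int q) \<ge> Dq q (t j) - 1"
      using Dq_shift[OF q1 e1, of z] unfolding zt t_def .
    have D2: "dint (y / real q) \<ge> real_of_int (Dq q (z mod int q)) / real q"
      unfolding z_def by (rule dint_floor_mod[OF q1])
    have yq: "y / real q = (real_of_int n0 + real j) * \<alpha>" unfolding y_def using qpos by simp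
    show ?thesis
    proof (cases "Dq q (t j) \<ge> 2")
      case True
      have "real_of_int (Dq q (t j) - 1) \<le> real_of_int (Dq q (z mod int q))" using D1 by simp
      hence "real_of_int (Dq q (t j) - 1) / real q \<le> dint (y / real q)"
        using D2 qpos by (meson divide_right_mono less_imp_le order_trans)
      hence dd: "real_of_int (Dq q (t j) - 1) / real q \<le> dint ((real_of_int n0 + real j) * \<alpha>)"
        unfolding yq .
      have pos: "real_of_int (Dq q (t j) - 1) / real q > 0" using True qpos by simp
      hence dpos: "dint ((real_of_int n0 + real j) * \<alpha>) > 0" using dd by linarith
      have "Lb N ((real_of_int n0 + real j) * \<alpha>) \<le> 2 / dint ((real_of_int n0 + real j) * \<alpha>)"
        unfolding Lb_def using dpos by simp
      also have "\<dots> \<le> 2 / (real_of_int (Dq q (t j) - 1) / real q)"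
        using dd pos mult_pos_pos[OF dpos pos] by (intro divide_left_mono) auto
      also have "\<dots> = gq N q (t j)" unfolding gq_def using True by simp
      finally show ?thesis .
    next
      case False
      thus ?thesis unfolding gq_def using Lb_le_N by simp
    qed
  qed
  have inj: "inj_on t {..<q}"
  proof (rule inj_onI)
    fix i j assume i: "i \<in> {..<q}" and j: "j \<in> {..<q}" and eq: "t i = t j"
    hence "int q dvd (c + int i * r) - (c + int j * r)" unfolding t_def by (simp add: mod_eq_dvd_iff)
    hence "int q dvd (int i - int j) * r" by (simp add: algebra_simps)
    hence dv: "int q dvd (int i - int j)" using cop by (simp add: coprime_dvd_mult_left_iff coprime_commute)
    show "i = j"
    proof (rule ccontr)
      assume "i \<noteq> j"
      hence "\<bar>int q\<bar> \<le> \<bar>int i - int j\<bar>" using dv by (intro dvd_imp_le_int) auto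
      thus False using i j by auto
    qed
  qed
  have "(\<Sum>j<q. Lb N ((real_of_int n0 + real j) * \<alpha>)) \<le> (\<Sum>j<q. gq N q (t j))"
    by (intro sum_mono bound_j) auto
  also have "\<dots> = (\<Sum>u\<in>t ` {..<q}. gq N q u)" by (simp add: sum.reindex[OF inj])
  also have "\<dots> \<le> (\<Sum>u\<in>{0..<int q}. gq N q u)"
  proof (rule sum_mono2)
    show "t ` {..<q} \<subseteq> {0..<int q}" unfolding t_def using q1 by auto
    show "\<And>b. b \<in> {0..<int q} - t ` {..<q} \<Longrightarrow> 0 \<le> gq N q b" unfolding gq_def by auto
  qed simp
  also have "\<dots> \<le> 4 * real N + 4 * real q * (1 + ln (real q))" by (rule gq_sum[OF q1])
  finally show ?thesis .
qed

lemma total_sum: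
  fixes \<alpha> :: real and r :: int and q X :: nat
  assumes q1: "q \<ge> 1" and cop: "coprime r (int q)"
    and app: "\<bar>\<alpha> - real_of_int r / real q\<bar> \<le> 1 / (real q)^2"
  shows "(\<Sum>n\<in>{1..X}. Lb N (real n * \<alpha>)) \<le> (real X / real q + 1) * (4 * real N + 4 * real q * (1 + ln (real q)))"
proof -
  define \<beta> where "\<beta> = 4 * real N + 4 * real q * (1 + ln (real q))"
  have b0: "\<beta> \<ge> 0" unfolding \<beta>_def using q1 by simp
  have ind: "(\<Sum>n\<in>{1..T*q}. Lb N (real n * \<alpha>)) \<le> real T * \<beta>" for T
  proof (induction T)
    case 0 thus ?case by simp
  next
    case (Suc T)
    have split: "{1..Suc T * q} = {1..T*q} \<union> {T*q+1..T*q+q}" by auto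
    have "(\<Sum>n\<in>{T*q+1..T*q+q}. Lb N (real n * \<alpha>)) = (\<Sum>j<q. Lb N ((real_of_int (int (T*q+1)) + real j) * \<alpha>))"
      by (rule sum.reindex_bij_witness[of _ "\<lambda>j. T*q+1+j" "\<lambda>n. n - (T*q+1)"]) (auto simp: algebra_simps)
    also have "\<dots> \<le> \<beta>" unfolding \<beta>_def by (rule block_sum[OF q1 cop app])
    finally have "(\<Sum>n\<in>{T*q+1..T*q+q}. Lb N (real n * \<alpha>)) \<le> \<beta>" .
    moreover have "(\<Sum>n\<in>{1..Suc T * q}. Lb N (real n * \<alpha>)) =
        (\<Sum>n\<in>{1..T*q}. Lb N (real n * \<alpha>)) + (\<Sum>n\<in>{T*q+1..T*q+q}. Lb N (real n * \<alpha>))"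
      unfolding split by (rule sum.union_disjoint) auto
    ultimately show ?case using Suc.IH by (simp add: algebra_simps)
  qed
  define T where "T = X div q + 1"
  have "X < T * q" unfolding T_def using q1
    by (metis add.commute div_mult_mod_eq mod_less_divisor mult_Suc nat_add_left_cancel_less plus_1_eq_Suc zero_less_one less_le_trans)
  hence "(\<Sum>n\<in>{1..X}. Lb N (real n * \<alpha>)) \<le> (\<Sum>n\<in>{1..T*q}. Lb N (real n * \<alpha>))"
    by (intro sum_mono2) (auto simp: Lb_nonneg)
  also have "\<dots> \<le> real T * \<beta>" by (rule ind)
  also have "real T \<le> real X / real q + 1"
  proof -
    have "X div q * q \<le> X" by (metis div_mult_mod_eq le_add1)
    hence "real (X div q) * real q \<le> real X" by (metis of_nat_le_iff of_nat_mult)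
    hence "real (X div q) \<le> real X / real q" using q1 by (simp add: field_simps)
    thus ?thesis unfolding T_def by simp
  qed
  hence "real T * \<beta> \<le> (real X / real q + 1) * \<beta>" using b0 by (intro mult_right_mono)
  finally show ?thesis unfolding \<beta>_def .
qed

lemma f_le_S:
  fixes B \<beta> :: real
  assumes "B \<ge> 1"
  shows "norm (weyl_f k B \<beta>) \<le> 2 * norm (\<Sum>x\<in>{1..int (nat \<lfloor>B\<rfloor>)}. e (\<beta> * of_int x ^ k))"
proof -
  define n where "n = int (nat \<lfloor>B\<rfloor>)"
  have nB: "n = \<lfloor>B\<rfloor>" unfolding n_def using assms by simp
  define S where "S = (\<Sum>x\<in>{1..n}. e (\<beta> * of_int x ^ k))"
  define S' where "S' = (\<Sum>x\<in>{1..n}. e (\<beta> * of_int (- x) ^ k))"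
  have I: "{x::int. 1 \<le> \<bar>x\<bar> \<and> real_of_int \<bar>x\<bar> \<le> B} = {1..n} \<union> uminus ` {1..n}"
  proof -
    have "real_of_int \<bar>x\<bar> \<le> B \<longleftrightarrow> \<bar>x\<bar> \<le> n" for x unfolding nB by (simp add: le_floor_iff)
    hence "{x::int. 1 \<le> \<bar>x\<bar> \<and> real_of_int \<bar>x\<bar> \<le> B} = {x. 1 \<le> \<bar>x\<bar> \<and> \<bar>x\<bar> \<le> n}" by auto
    also have "\<dots> = {1..n} \<union> uminus ` {1..n}"
    proof (intro equalityI subsetI)
      fix x assume "x \<in> {x. 1 \<le> \<bar>x\<bar> \<and> \<bar>x\<bar> \<le> n}"
      thus "x \<in> {1..n} \<union> uminus ` {1..n}"
        by (cases "x \<ge> 0") (auto intro!: image_eqI[of _ _ "-x"])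
    qed auto
    finally show ?thesis .
  qed
  have "weyl_f k B \<beta> = S + (\<Sum>x\<in>uminus ` {1..n}. e (\<beta> * of_int x ^ k))"
    unfolding weyl_f_def I S_def by (rule sum.union_disjoint) auto
  also have "(\<Sum>x\<in>uminus ` {1..n}. e (\<beta> * of_int x ^ k)) = S'"
    unfolding S'_def by (subst sum.reindex) (auto simp: inj_on_def)
  finally have f: "weyl_f k B \<beta> = S + S'" .
  have "norm S' = norm S"
  proof (cases "even k")
    case True thus ?thesis unfolding S'_def S_def by simp
  next
    case False
    hence "S' = cnj S" unfolding S'_def S_def by (simp add: cnj_sum e_cnj)
    thus ?thesis by simp
  qed
  hence "norm (weyl_f k B \<beta>) \<le> 2 * norm S" unfolding f using norm_triangle_ineq[of S S'] by simp
  thus ?thesis unfolding S_def n_def .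
qed

lemma card_zero_lists: "card {hs \<in> Hl N j. 0 \<in> set hs} \<le> j * (2*N+1)^(j-1)"
proof (induction j)
  case 0
  have e: "{hs \<in> Hl N 0. 0 \<in> set hs} = {}" unfolding Hl_def by auto
  show ?case by (simp only: e card.empty)
next
  case (Suc j)
  let ?H = "{- int N..int N}"
  have sub: "{hs \<in> Hl N (Suc j). 0 \<in> set hs} \<subseteq>
     (\<lambda>hs. 0 # hs) ` Hl N j \<union> (\<lambda>(h, hs). h # hs) ` (?H \<times> {hs \<in> Hl N j. 0 \<in> set hs})"
  proof
    fix xs assume xs: "xs \<in> {hs \<in> Hl N (Suc j). 0 \<in> set hs}"
    then obtain h hs where hhs: "xs = h # hs" unfolding Hl_def by (cases xs) auto
    have hH: "h \<in> ?H" and hs: "hs \<in> Hl N j" using xs hhs unfolding Hl_def by auto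
    show "xs \<in> (\<lambda>hs. 0 # hs) ` Hl N j \<union> (\<lambda>(h, hs). h # hs) ` (?H \<times> {hs \<in> Hl N j. 0 \<in> set hs})"
    proof (cases "h = 0")
      case True thus ?thesis using hhs hs by auto
    next
      case False
      hence "0 \<in> set hs" using xs hhs by auto
      thus ?thesis using hhs hs hH by force
    qed
  qed
  have fin: "finite {hs \<in> Hl N j. 0 \<in> set hs}" using finite_Hl by simp
  have "card {hs \<in> Hl N (Suc j). 0 \<in> set hs} \<le>
     card ((\<lambda>hs. 0 # hs) ` Hl N j \<union> (\<lambda>(h, hs). h # hs) ` (?H \<times> {hs \<in> Hl N j. 0 \<in> set hs}))"
    using fin finite_Hl by (intro card_mono[OF _ sub]) auto
  also have "\<dots> \<le> card ((\<lambda>hs. 0 # hs) ` Hl N j) + card ((\<lambda>(h, hs). h # hs) ` (?H \<times> {hs \<in> Hl N j. 0 \<in> set hs}))"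
    by (rule card_Un_le)
  also have "\<dots> \<le> card (Hl N j) + card (?H \<times> {hs \<in> Hl N j. 0 \<in> set hs})"
    by (intro add_mono card_image_le) (use fin finite_Hl in auto)
  also have "\<dots> \<le> (2*N+1)^j + (2*N+1) * (j * (2*N+1)^(j-1))"
  proof -
    have "card ?H = 2*N+1" by simp
    hence "card (?H \<times> {hs \<in> Hl N j. 0 \<in> set hs}) = (2*N+1) * card {hs \<in> Hl N j. 0 \<in> set hs}"
      by (simp add: card_cartesian_product)
    also have "\<dots> \<le> (2*N+1) * (j * (2*N+1)^(j-1))" using Suc.IH by (rule mult_left_mono) simp
    finally show ?thesis by (simp add: card_Hl)
  qed
  also have "\<dots> = Suc j * (2*N+1)^(Suc j - 1)"
  proof (cases j)
    case 0 thus ?thesis by simp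
  next
    case (Suc i) thus ?thesis by (simp add: algebra_simps)
  qed
  finally show ?case .
qed

definition Dv :: "nat \<Rightarrow> int set" where "Dv n = {d. d dvd int n}"

lemma Dv_card:
  assumes "n \<ge> 1"
  shows "finite (Dv n)" "card (Dv n) \<le> 2 * tau n"
proof -
  let ?D = "{d::nat. d dvd n}"
  have finD: "finite ?D" using assms by simp
  have sub: "Dv n \<subseteq> int ` ?D \<union> (\<lambda>d. - int d) ` ?D"
  proof
    fix d assume "d \<in> Dv n"
    hence "\<bar>d\<bar> dvd int n" unfolding Dv_def by simp
    hence nd: "nat \<bar>d\<bar> dvd n" by (metis abs_ge_zero int_nat_eq of_nat_dvd_iff)
    show "d \<in> int ` ?D \<union> (\<lambda>d. - int d) ` ?D"
    proof (cases "d \<ge> 0")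
      case True thus ?thesis using nd by (auto intro!: image_eqI[of _ _ "nat d"])
    next
      case False
      hence "d = - int (nat \<bar>d\<bar>)" by simp
      thus ?thesis using nd by blast
    qed
  qed
  show "finite (Dv n)" using finite_subset[OF sub] finD by blast
  have "card (Dv n) \<le> card (int ` ?D \<union> (\<lambda>d. - int d) ` ?D)" using finD by (intro card_mono[OF _ sub]) auto
  also have "\<dots> \<le> card (int ` ?D) + card ((\<lambda>d. - int d) ` ?D)" by (rule card_Un_le)
  also have "\<dots> \<le> card ?D + card ?D" by (intro add_mono card_image_le finD)
  finally show "card (Dv n) \<le> 2 * tau n" unfolding tau_def by simp
qed

lemma abs_prod_list_le:
  assumes "set hs \<subseteq> {- int N..int N}"
  shows "\<bar>prod_list hs\<bar> \<le> int N ^ length hs"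
  using assms
proof (induction hs)
  case Nil thus ?case by simp
next
  case (Cons h hs)
  have "\<bar>h\<bar> \<le> int N" using Cons.prems by auto
  moreover have "\<bar>prod_list hs\<bar> \<le> int N ^ length hs" using Cons by auto
  ultimately show ?case by (simp add: abs_mult mult_mono)
qed

lemma of_int_prod_list: "(\<Prod>h\<leftarrow>hs. real_of_int h) = real_of_int (prod_list hs)"
  by (induction hs) auto

lemma card_IA:
  fixes A :: real
  assumes "A \<ge> 1"
  shows "finite {a::int. 0 < \<bar>a\<bar> \<and> real_of_int \<bar>a\<bar> \<le> A}"
    "real (card {a::int. 0 < \<bar>a\<bar> \<and> real_of_int \<bar>a\<bar> \<le> A}) \<le> 2 * A"
proof -
  define m where "m = \<lfloor>A\<rfloor>"
  have "real_of_int \<bar>a\<bar> \<le> A \<longleftrightarrow> \<bar>a\<bar> \<le> m" for a unfolding m_def by (simp add: le_floor_iff)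
  hence "{a::int. 0 < \<bar>a\<bar> \<and> real_of_int \<bar>a\<bar> \<le> A} = {a. 0 < \<bar>a\<bar> \<and> \<bar>a\<bar> \<le> m}" by auto
  also have "\<dots> = {1..m} \<union> {-m..-1}" by auto
  finally have eq: "{a::int. 0 < \<bar>a\<bar> \<and> real_of_int \<bar>a\<bar> \<le> A} = {1..m} \<union> {-m..-1}" .
  show "finite {a::int. 0 < \<bar>a\<bar> \<and> real_of_int \<bar>a\<bar> \<le> A}" unfolding eq by simp
  have "card ({1..m} \<union> {-m..-1}) \<le> card {1..m} + card {-m..-1}" by (rule card_Un_le)
  also have "\<dots> = 2 * nat m" by simp
  finally have "real (card ({1..m} \<union> {-m..-1})) \<le> 2 * real (nat m)" by linarith
  moreover have "real (nat m) \<le> A" unfolding m_def using assms by linarith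
  ultimately show "real (card {a::int. 0 < \<bar>a\<bar> \<and> real_of_int \<bar>a\<bar> \<le> A}) \<le> 2 * A" unfolding eq by linarith
qed

lemma key_bound:
  fixes A B \<alpha> :: real and r :: int and q k :: nat and C\<tau> \<epsilon>1 :: real
  assumes k2: "k \<ge> 2" and Ct: "C\<tau> > 0" and e1: "\<epsilon>1 > 0"
    and tb: "\<And>n. n \<ge> 1 \<Longrightarrow> real (tau n) \<le> C\<tau> * real n powr \<epsilon>1"
    and A1: "A \<ge> 1" and B1: "B \<ge> 1" and q1: "q \<ge> 1" and cop: "coprime r (int q)"
    and app: "\<bar>\<alpha> - real_of_int r / real q\<bar> \<le> 1 / (real q)^2"
  defines "N \<equiv> nat \<lfloor>B\<rfloor>"
  defines "X \<equiv> nat \<lfloor>A * real (Kc k) * real N ^ (k-1)\<rfloor>"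
  shows "(\<Sum>a\<in>{a::int. 0 < \<bar>a\<bar> \<and> real_of_int \<bar>a\<bar> \<le> A}.
               norm (weyl_f k B (real_of_int a * \<alpha>)) ^ (2^(k-1)))
    \<le> 2^(2^(k-1)) * real (2*N+1) ^ (2^(k-1) - k) *
        (2 * A * real (k-1) * real (2*N+1)^(k-2) * real N
         + (2 * C\<tau>)^k * real X powr (real k * \<epsilon>1) * ((real X / real q + 1) * (4 * real N + 4 * real q * (1 + ln (real q)))))"
proof -
  define M :: nat where "M = 2^(k-1)"
  define IA where "IA = {a::int. 0 < \<bar>a\<bar> \<and> real_of_int \<bar>a\<bar> \<le> A}"
  define H where "H = Hl N (k-1)"
  define K where "K = Kc k"
  define W where "W z = fst z * int K * prod_list (snd z)" for z :: "int \<times> int list"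
  define G where "G n = Lb N (real n * \<alpha>)" for n :: nat
  define c1 where "c1 = 2^M * real (2*N+1) ^ (M - k)"
  have c1pos: "c1 \<ge> 0" unfolding c1_def by simp
  have finIA: "finite IA" and cardIA: "real (card IA) \<le> 2 * A" unfolding IA_def using card_IA[OF A1] by auto
  have finH: "finite H" unfolding H_def by (rule finite_Hl)
  have N1: "N \<ge> 1" unfolding N_def using B1 by linarith
  have K1: "K \<ge> 1" unfolding K_def by (rule Kc_pos)
  have step1: "norm (weyl_f k B (real_of_int a * \<alpha>)) ^ M \<le> c1 * (\<Sum>hs\<in>H. Lb N (real_of_int (W (a, hs)) * \<alpha>))" for a
  proof -
    define S where "S = (\<Sum>x\<in>{1..int N}. e ((real_of_int a * \<alpha>) * of_int x ^ k))"
    have "norm (weyl_f k B (real_of_int a * \<alpha>)) \<le> 2 * norm S" unfolding S_def N_def by (rule f_le_S[OF B1])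
    hence "norm (weyl_f k B (real_of_int a * \<alpha>)) ^ M \<le> (2 * norm S) ^ M" by (intro power_mono) auto
    also have "\<dots> = 2^M * norm S ^ M" by (simp add: power_mult_distrib)
    also have "norm S ^ M \<le> real (2*N+1) ^ (M - k) * (\<Sum>hs\<in>H. Lb N ((real_of_int a * \<alpha>) * real (Kc k) * (\<Prod>h\<leftarrow>hs. real_of_int h)))"
      unfolding S_def M_def H_def using k2 by (intro weyl_bound) auto
    also have "(\<Sum>hs\<in>H. Lb N ((real_of_int a * \<alpha>) * real (Kc k) * (\<Prod>h\<leftarrow>hs. real_of_int h))) = (\<Sum>hs\<in>H. Lb N (real_of_int (W (a, hs)) * \<alpha>))"
      unfolding W_def K_def by (intro sum.cong refl) (simp add: of_int_prod_list algebra_simps)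
    finally show ?thesis unfolding c1_def by (simp add: mult.assoc mult_left_mono)
  qed
  define Z where "Z = IA \<times> H"
  have finZ: "finite Z" unfolding Z_def using finIA finH by simp
  have "(\<Sum>a\<in>IA. norm (weyl_f k B (real_of_int a * \<alpha>)) ^ M) \<le> (\<Sum>a\<in>IA. c1 * (\<Sum>hs\<in>H. Lb N (real_of_int (W (a, hs)) * \<alpha>)))"
    by (intro sum_mono step1)
  also have "\<dots> = c1 * (\<Sum>z\<in>Z. Lb N (real_of_int (W z) * \<alpha>))"
    unfolding Z_def by (simp add: sum_distrib_left sum.cartesian_product case_prod_beta)
  finally have s1: "(\<Sum>a\<in>IA. norm (weyl_f k B (real_of_int a * \<alpha>)) ^ M) \<le> c1 * (\<Sum>z\<in>Z. Lb N (real_of_int (W z) * \<alpha>))" .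
  define Z0 where "Z0 = {z\<in>Z. W z = 0}"
  define Z1 where "Z1 = {z\<in>Z. W z \<noteq> 0}"
  have splitZ: "(\<Sum>z\<in>Z. Lb N (real_of_int (W z) * \<alpha>)) = (\<Sum>z\<in>Z0. Lb N (real_of_int (W z) * \<alpha>)) + (\<Sum>z\<in>Z1. Lb N (real_of_int (W z) * \<alpha>))"
  proof -
    have ZZ: "Z = Z0 \<union> Z1" unfolding Z0_def Z1_def by auto
    have "(\<Sum>z\<in>Z. Lb N (real_of_int (W z) * \<alpha>)) = (\<Sum>z\<in>Z0 \<union> Z1. Lb N (real_of_int (W z) * \<alpha>))"
      by (simp only: ZZ[symmetric])
    also have "\<dots> = (\<Sum>z\<in>Z0. Lb N (real_of_int (W z) * \<alpha>)) + (\<Sum>z\<in>Z1. Lb N (real_of_int (W z) * \<alpha>))"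
      by (rule sum.union_disjoint) (use finZ in \<open>auto simp: Z0_def Z1_def\<close>)
    finally show ?thesis .
  qed
  have Z0b: "(\<Sum>z\<in>Z0. Lb N (real_of_int (W z) * \<alpha>)) \<le> 2 * A * real (k-1) * real (2*N+1)^(k-2) * real N"
  proof -
    have sub: "Z0 \<subseteq> IA \<times> {hs \<in> H. 0 \<in> set hs}"
    proof
      fix z assume z: "z \<in> Z0"
      hence "fst z \<noteq> 0" "W z = 0" unfolding Z0_def Z_def IA_def by auto
      hence "prod_list (snd z) = 0" unfolding W_def using K1 by auto
      thus "z \<in> IA \<times> {hs \<in> H. 0 \<in> set hs}" using z unfolding Z0_def Z_def by (auto simp: prod_list_zero_iff)
    qed
    have "(\<Sum>z\<in>Z0. Lb N (real_of_int (W z) * \<alpha>)) \<le> (\<Sum>z\<in>Z0. real N)" by (intro sum_mono Lb_le_N)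
    also have "\<dots> = real (card Z0) * real N" by simp
    also have "real (card Z0) \<le> real (card IA) * real (card {hs \<in> H. 0 \<in> set hs})"
    proof -
      have "card Z0 \<le> card (IA \<times> {hs \<in> H. 0 \<in> set hs})" using finIA finH by (intro card_mono[OF _ sub]) auto
      hence "card Z0 \<le> card IA * card {hs \<in> H. 0 \<in> set hs}" by (simp add: card_cartesian_product)
      thus ?thesis by (metis of_nat_le_iff of_nat_mult)
    qed
    also have "real (card {hs \<in> H. 0 \<in> set hs}) \<le> real (k-1) * real (2*N+1)^(k-2)"
    proof -
      have "card {hs \<in> H. 0 \<in> set hs} \<le> (k-1) * (2*N+1)^(k-1-1)" unfolding H_def by (rule card_zero_lists)
      moreover have "k - 1 - 1 = k - 2" by simp
      ultimately have "card {hs \<in> H. 0 \<in> set hs} \<le> (k-1) * (2*N+1)^(k-2)" by simp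
      hence "real (card {hs \<in> H. 0 \<in> set hs}) \<le> real ((k-1) * (2*N+1)^(k-2))" by (rule of_nat_mono)
      thus ?thesis by simp
    qed
    hence "real (card IA) * real (card {hs \<in> H. 0 \<in> set hs}) \<le> 2 * A * (real (k-1) * real (2*N+1)^(k-2))"
      using cardIA by (intro mult_mono) auto
    finally show ?thesis using N1 by (simp add: mult_right_mono mult.assoc)
  qed
  define v where "v z = nat \<bar>W z\<bar>" for z
  have Lbv: "Lb N (real_of_int (W z) * \<alpha>) = G (v z)" for z
  proof (cases "W z \<ge> 0")
    case True thus ?thesis unfolding G_def v_def by simp
  next
    case False
    hence "real_of_int (W z) * \<alpha> = - (real (v z) * \<alpha>)" unfolding v_def by simp
    thus ?thesis unfolding G_def by (simp add: Lb_minus)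
  qed
  have vX: "v z \<in> {1..X}" if z: "z \<in> Z1" for z
  proof -
    obtain a hs where zz: "z = (a, hs)" by (cases z)
    have a: "real_of_int \<bar>a\<bar> \<le> A" using z zz unfolding Z1_def Z_def IA_def by auto
    have hs: "set hs \<subseteq> {- int N..int N}" "length hs = k - 1" using z zz unfolding Z1_def Z_def H_def Hl_def by auto
    have p: "\<bar>prod_list hs\<bar> \<le> int N ^ (k-1)" using abs_prod_list_le[OF hs(1)] hs(2) by simp
    have "real_of_int \<bar>W z\<bar> = real_of_int \<bar>a\<bar> * real K * real_of_int \<bar>prod_list hs\<bar>"
      unfolding W_def zz by (simp add: abs_mult)
    also have "\<dots> \<le> A * real K * real N ^ (k-1)"
    proof (intro mult_mono)
      have "real_of_int \<bar>prod_list hs\<bar> \<le> real_of_int (int N ^ (k-1))" using p by (simp only: of_int_le_iff)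
      thus "real_of_int \<bar>prod_list hs\<bar> \<le> real N ^ (k-1)" by simp
    qed (use a in auto)
    finally have "real_of_int \<bar>W z\<bar> \<le> A * real K * real N ^ (k-1)" .
    hence "\<bar>W z\<bar> \<le> \<lfloor>A * real K * real N ^ (k-1)\<rfloor>" by (simp add: le_floor_iff)
    hence "v z \<le> X" unfolding v_def X_def K_def by (simp add: nat_le_eq_zle)
    moreover have "v z \<ge> 1" using z unfolding Z1_def v_def by auto
    ultimately show ?thesis by simp
  qed
  define cnt where "cnt = (2 * C\<tau>)^k * real X powr (real k * \<epsilon>1)"
  have cntb: "real (card {z\<in>Z1. v z = n}) \<le> cnt" if n: "n \<in> {1..X}" for n
  proof -
    have n1: "n \<ge> 1" using n by simp
    have finD: "finite (Dv n)" and cD: "card (Dv n) \<le> 2 * tau n" using Dv_card[OF n1] by auto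
    have sub: "{z\<in>Z1. v z = n} \<subseteq> Dv n \<times> {hs. set hs \<subseteq> Dv n \<and> length hs = k - 1}"
    proof
      fix z assume z: "z \<in> {z\<in>Z1. v z = n}"
      obtain a hs where zz: "z = (a, hs)" by (cases z)
      have W0: "W z \<noteq> 0" and vn: "v z = n" using z unfolding Z1_def by auto
      have absW: "\<bar>W z\<bar> = int n" using vn W0 unfolding v_def by auto
      have dW: "d \<in> Dv n" if "d dvd W z" for d
      proof -
        have "d dvd \<bar>W z\<bar>" using that by simp
        thus ?thesis unfolding Dv_def absW by simp
      qed
      have "a \<in> Dv n" using dW[of a] unfolding W_def zz by simp
      moreover have "set hs \<subseteq> Dv n"
      proof
        fix h assume "h \<in> set hs"
        hence "h dvd prod_list hs" by (rule prod_list_dvd)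
        hence "h dvd W z" unfolding W_def zz by simp
        thus "h \<in> Dv n" by (rule dW)
      qed
      moreover have "length hs = k - 1" using z zz unfolding Z1_def Z_def H_def Hl_def by auto
      ultimately show "z \<in> Dv n \<times> {hs. set hs \<subseteq> Dv n \<and> length hs = k - 1}" using zz by auto
    qed
    have "card {z\<in>Z1. v z = n} \<le> card (Dv n \<times> {hs. set hs \<subseteq> Dv n \<and> length hs = k - 1})"
      using finD by (intro card_mono[OF _ sub]) (auto intro: finite_lists_length_eq)
    also have "\<dots> = card (Dv n) ^ k"
      using finD k2 by (simp add: card_cartesian_product card_lists_length_eq power_Suc[symmetric])
    finally have "real (card {z\<in>Z1. v z = n}) \<le> real (card (Dv n) ^ k)" by (rule of_nat_mono)
    hence c1: "real (card {z\<in>Z1. v z = n}) \<le> real (card (Dv n)) ^ k" by simp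
    have "real (card (Dv n)) \<le> 2 * C\<tau> * real X powr \<epsilon>1"
    proof -
      have "real (card (Dv n)) \<le> 2 * real (tau n)" using cD by linarith
      also have "\<dots> \<le> 2 * (C\<tau> * real n powr \<epsilon>1)" using tb[OF n1] by simp
      also have "real n powr \<epsilon>1 \<le> real X powr \<epsilon>1" using n e1 by (intro powr_mono2) auto
      finally show ?thesis using Ct by (simp add: mult_left_mono)
    qed
    hence "real (card (Dv n)) ^ k \<le> (2 * C\<tau> * real X powr \<epsilon>1) ^ k" by (intro power_mono) auto
    also have "\<dots> = cnt"
    proof -
      have Xp: "real X > 0" using n by simp
      have "(real X powr \<epsilon>1) ^ k = (real X powr \<epsilon>1) powr real k" using Xp by (simp add: powr_realpow)
      also have "\<dots> = real X powr (real k * \<epsilon>1)" by (simp add: powr_powr mult.commute)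
      finally show ?thesis unfolding cnt_def by (simp add: power_mult_distrib)
    qed
    finally show ?thesis using c1 by linarith
  qed
  have Gnn: "G n \<ge> 0" for n unfolding G_def by (rule Lb_nonneg)
  have finZ1: "finite Z1" unfolding Z1_def using finZ by simp
  have "(\<Sum>z\<in>Z1. Lb N (real_of_int (W z) * \<alpha>)) = (\<Sum>z\<in>Z1. G (v z))" by (simp add: Lbv)
  also have "\<dots> = (\<Sum>n\<in>v ` Z1. \<Sum>z\<in>{z\<in>Z1. v z = n}. G (v z))" by (rule sum.image_gen[OF finZ1])
  also have "\<dots> = (\<Sum>n\<in>v ` Z1. real (card {z\<in>Z1. v z = n}) * G n)"
    by (intro sum.cong refl) simp
  also have "\<dots> \<le> (\<Sum>n\<in>v ` Z1. cnt * G n)"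
    using cntb vX Gnn by (intro sum_mono mult_right_mono) auto
  also have "\<dots> \<le> (\<Sum>n\<in>{1..X}. cnt * G n)"
  proof (rule sum_mono2)
    show "v ` Z1 \<subseteq> {1..X}" using vX by auto
    show "\<And>b. b \<in> {1..X} - v ` Z1 \<Longrightarrow> 0 \<le> cnt * G b" unfolding cnt_def using Gnn Ct by simp
  qed simp
  also have "\<dots> = cnt * (\<Sum>n\<in>{1..X}. G n)" by (simp add: sum_distrib_left)
  also have "\<dots> \<le> cnt * ((real X / real q + 1) * (4 * real N + 4 * real q * (1 + ln (real q))))"
    unfolding G_def using Ct by (intro mult_left_mono total_sum[OF q1 cop app]) (auto simp: cnt_def)
  finally have Z1b: "(\<Sum>z\<in>Z1. Lb N (real_of_int (W z) * \<alpha>)) \<le> cnt * ((real X / real q + 1) * (4 * real N + 4 * real q * (1 + ln (real q))))" .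
  have "(\<Sum>a\<in>IA. norm (weyl_f k B (real_of_int a * \<alpha>)) ^ M) \<le>
      c1 * (2 * A * real (k-1) * real (2*N+1)^(k-2) * real N + cnt * ((real X / real q + 1) * (4 * real N + 4 * real q * (1 + ln (real q)))))"
  proof -
    have "(\<Sum>z\<in>Z. Lb N (real_of_int (W z) * \<alpha>)) \<le> 2 * A * real (k-1) * real (2*N+1)^(k-2) * real N + cnt * ((real X / real q + 1) * (4 * real N + 4 * real q * (1 + ln (real q))))"
      unfolding splitZ using Z0b Z1b by (rule add_mono)
    hence "c1 * (\<Sum>z\<in>Z. Lb N (real_of_int (W z) * \<alpha>)) \<le> c1 * (2 * A * real (k-1) * real (2*N+1)^(k-2) * real N + cnt * ((real X / real q + 1) * (4 * real N + 4 * real q * (1 + ln (real q)))))"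
      using c1pos by (rule mult_left_mono)
    thus ?thesis using s1 by linarith
  qed
  thus ?thesis unfolding IA_def M_def c1_def cnt_def by (simp add: mult.assoc)
qed

theorem lemma4p3:
  fixes k :: nat and \<epsilon> :: real
  assumes "k \<ge> 3" and "\<epsilon> > 0"
  shows "\<exists>C>0. \<forall>(A::real) (B::real) (\<alpha>::real) (r::int) (q::nat).
           A \<ge> 1 \<longrightarrow> B \<ge> 1 \<longrightarrow> q \<ge> 1 \<longrightarrow> coprime r (int q) \<longrightarrow>
           \<bar>\<alpha> - real_of_int r / real q\<bar> \<le> 1 / (real q)^2 \<longrightarrow>
           (\<Sum>a\<in>{a::int. 0 < \<bar>a\<bar> \<and> real_of_int \<bar>a\<bar> \<le> A}.
               norm (weyl_f k B (real_of_int a * \<alpha>)) ^ (2^(k-1)))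
           \<le> C * A * B ^ (2^(k-1)) * (1 / real q + 1 / B + real q / (A * B ^ k))
               * (A * B * real q) powr \<epsilon>"
proof -
  have k3: "k \<ge> 3" and ep: "\<epsilon> > 0" using assms by auto
  have k2: "k \<ge> 2" using k3 by simp
  define \<epsilon>1 :: real where "\<epsilon>1 = \<epsilon> / (2 * real k ^ 2)"
  have e1: "\<epsilon>1 > 0" unfolding \<epsilon>1_def using ep k3 by simp
  obtain C\<tau> where Ct: "C\<tau> > 0" and tb: "\<And>n. n \<ge> 1 \<Longrightarrow> real (tau n) \<le> C\<tau> * real n powr \<epsilon>1"
    using divisor_bound[OF e1] by blast
  define M :: nat where "M = 2^(k-1)"
  have Mk: "k \<le> M" unfolding M_def using less_exp[of "k-1"] k3 by linarith
  define K where "K = real (Kc k)"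
  have K1: "K \<ge> 1" unfolding K_def using Kc_pos[of k] by simp
  define K' where "K' = K powr (real k * \<epsilon>1)"
  have K'0: "K' \<ge> 0" unfolding K'_def by simp
  define c' where "c' = 4 + 8 / \<epsilon>"
  have c'0: "c' \<ge> 0" unfolding c'_def using ep by simp
  define C0 where "C0 = 2^M * (3^(M-k) * (2 * real (k-1) * 3^(k-2)) + 3^(M-k) * (2 * C\<tau>)^k * K' * (4 * K + c' * K + 4 + c'))"
  have C0pos: "C0 > 0" unfolding C0_def using Ct K'0 K1 c'0 k3 by (intro mult_pos_pos add_pos_nonneg) auto
  have main: "(\<Sum>a\<in>{a::int. 0 < \<bar>a\<bar> \<and> real_of_int \<bar>a\<bar> \<le> A}.
               norm (weyl_f k B (real_of_int a * \<alpha>)) ^ (2^(k-1)))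
           \<le> C0 * A * B ^ (2^(k-1)) * (1 / real q + 1 / B + real q / (A * B ^ k))
               * (A * B * real q) powr \<epsilon>"
    if A1: "A \<ge> 1" and B1: "B \<ge> 1" and q1: "q \<ge> 1" and cop: "coprime r (int q)"
      and app: "\<bar>\<alpha> - real_of_int r / real q\<bar> \<le> 1 / (real q)^2" for A B \<alpha> r q
  proof -
    define N where "N = nat \<lfloor>B\<rfloor>"
    define X where "X = nat \<lfloor>A * real (Kc k) * real N ^ (k-1)\<rfloor>"
    define T0 where "T0 = 2 * A * real (k-1) * real (2*N+1)^(k-2) * real N"
    define T1 where "T1 = (2 * C\<tau>)^k * real X powr (real k * \<epsilon>1) * ((real X / real q + 1) * (4 * real N + 4 * real q * (1 + ln (real q))))"
    have kb: "(\<Sum>a\<in>{a::int. 0 < \<bar>a\<bar> \<and> real_of_int \<bar>a\<bar> \<le> A}.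
               norm (weyl_f k B (real_of_int a * \<alpha>)) ^ (2^(k-1)))
         \<le> 2^M * real (2*N+1) ^ (M - k) * (T0 + T1)"
      unfolding M_def T0_def T1_def N_def X_def
      by (rule key_bound[OF k2 Ct e1 tb A1 B1 q1 cop app])
    define Bm where "Bm = B ^ (M - k)"
    define U where "U = A powr (\<epsilon>/2) * B powr (\<epsilon>/2)"
    define V where "V = real q powr (\<epsilon>/2)"
    define P where "P = (A * B * real q) powr \<epsilon>"
    define R where "R = A * Bm * B^k / real q + A * Bm * B^(k-1) + real q * Bm"
    have qpos: "real q > 0" using q1 by simp
    have Bm1: "Bm \<ge> 1" unfolding Bm_def using B1 by simp
    have U1: "U \<ge> 1"
    proof -
      have a: "A powr (\<epsilon>/2) \<ge> 1" using A1 ep by (intro ge_one_powr_ge_zero) auto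
      have b: "B powr (\<epsilon>/2) \<ge> 1" using B1 ep by (intro ge_one_powr_ge_zero) auto
      show ?thesis unfolding U_def using mult_mono[OF a b] by simp
    qed
    have V1: "V \<ge> 1" unfolding V_def using q1 ep by (intro ge_one_powr_ge_zero) auto
    have AB1: "A * B \<ge> 1" using mult_mono[OF A1 B1] A1 by simp
    have ABq1: "A * B * real q \<ge> 1" using mult_mono[OF AB1, of 1 "real q"] q1 AB1 by simp
    have UVP: "U * V \<le> P"
    proof -
      have "U * V = (A * B * real q) powr (\<epsilon>/2)" unfolding U_def V_def using A1 B1 q1 by (simp add: powr_mult)
      also have "\<dots> \<le> (A * B * real q) powr \<epsilon>" using ABq1 ep
        by (intro powr_mono) auto
      finally show ?thesis unfolding P_def .
    qed
    have P1: "P \<ge> 1" using UVP mult_mono[OF U1 V1] U1 by simp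
    have fB: "\<lfloor>B\<rfloor> \<ge> 1" using B1 by (simp add: le_floor_iff)
    have rN: "real N = real_of_int \<lfloor>B\<rfloor>" unfolding N_def using fB by simp
    have N1: "real N \<ge> 1" using rN fB by simp
    have NB: "real N \<le> B" using rN of_int_floor_le[of B] by simp
    have h1: "real (2*N+1) \<le> 3 * B" using N1 NB by simp
    have h2: "real (2*N+1) ^ (M - k) \<le> 3^(M-k) * Bm"
    proof -
      have "real (2*N+1) ^ (M - k) \<le> (3 * B) ^ (M - k)" using h1 by (intro power_mono) auto
      thus ?thesis unfolding Bm_def by (simp add: power_mult_distrib)
    qed
    have Bk: "B^(k-1) = B^(k-2) * B"
    proof -
      have e: "k - 1 = Suc (k - 2)" using k3 by simp
      show ?thesis unfolding e by (simp add: power_Suc2)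
    qed
    have h3: "T0 \<le> 2 * real (k-1) * 3^(k-2) * (A * B^(k-1))"
    proof -
      have "real (2*N+1)^(k-2) \<le> (3*B)^(k-2)" using h1 by (intro power_mono) auto
      hence a: "real (2*N+1)^(k-2) * real N \<le> (3*B)^(k-2) * B" using NB N1 by (intro mult_mono) auto
      have "T0 = 2 * A * real (k-1) * (real (2*N+1)^(k-2) * real N)" unfolding T0_def by (simp add: mult.assoc)
      also have "\<dots> \<le> 2 * A * real (k-1) * ((3*B)^(k-2) * B)" using a A1 by (intro mult_left_mono) auto
      also have "\<dots> = 2 * real (k-1) * 3^(k-2) * (A * B^(k-1))" unfolding Bk by (simp add: power_mult_distrib algebra_simps)
      finally show ?thesis .
    qed
    have XB: "real X \<le> A * K * B^(k-1)"
    proof -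
      have y0: "0 \<le> A * real (Kc k) * real N ^ (k-1)" using A1 by simp
      hence "\<lfloor>A * real (Kc k) * real N ^ (k-1)\<rfloor> \<ge> 0" by simp
      hence "real X = real_of_int \<lfloor>A * real (Kc k) * real N ^ (k-1)\<rfloor>" unfolding X_def by simp
      hence "real X \<le> A * real (Kc k) * real N ^ (k-1)" using of_int_floor_le[of "A * real (Kc k) * real N ^ (k-1)"] by linarith
      also have "\<dots> \<le> A * K * B^(k-1)" unfolding K_def using NB N1 A1 by (intro mult_left_mono power_mono) auto
      finally show ?thesis .
    qed
    have hX: "real X powr (real k * \<epsilon>1) \<le> K' * U"
    proof -
      have pa: "A powr (real k * \<epsilon>1) \<le> A powr (\<epsilon>/2)"
      proof (rule powr_mono[OF _ A1])
        have "real k * \<epsilon>1 = \<epsilon> / (2 * real k)" unfolding \<epsilon>1_def using k3 by (simp add: power2_eq_square)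
        also have "\<dots> \<le> \<epsilon> / 2" using ep k3 by (intro divide_left_mono) auto
        finally show "real k * \<epsilon>1 \<le> \<epsilon> / 2" .
      qed
      have pb: "B powr (real (k-1) * (real k * \<epsilon>1)) \<le> B powr (\<epsilon>/2)"
      proof (rule powr_mono[OF _ B1])
        have "real (k-1) * (real k * \<epsilon>1) = \<epsilon> * real (k-1) / (2 * real k)" unfolding \<epsilon>1_def using k3 by (simp add: power2_eq_square)
        also have "\<dots> \<le> \<epsilon> * real k / (2 * real k)" using ep k3 by (intro divide_right_mono mult_left_mono) auto
        also have "\<dots> = \<epsilon> / 2" using k3 by simp
        finally show "real (k-1) * (real k * \<epsilon>1) \<le> \<epsilon> / 2" .
      qed
      have pab: "A powr (real k * \<epsilon>1) * B powr (real (k-1) * (real k * \<epsilon>1)) \<le> U"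
        unfolding U_def by (rule mult_mono[OF pa pb]) auto
      have "real X powr (real k * \<epsilon>1) \<le> (A * K * B^(k-1)) powr (real k * \<epsilon>1)"
        using XB e1 by (intro powr_mono2) auto
      also have "\<dots> = K' * (A powr (real k * \<epsilon>1) * B powr (real (k-1) * (real k * \<epsilon>1)))"
        unfolding K'_def using A1 B1 K1 by (simp add: powr_mult powr_realpow[symmetric] powr_powr)
      also have "\<dots> \<le> K' * U" using pab K'0 by (rule mult_left_mono)
      finally show ?thesis .
    qed
    have hq: "real X / real q + 1 \<le> A * K * B^(k-1) / real q + 1" using XB qpos by (simp add: divide_right_mono)
    have hl: "4 * real N + 4 * real q * (1 + ln (real q)) \<le> 4 * B + c' * real q * V"
    proof -
      have "ln (real q) \<le> real q powr (\<epsilon>/2) / (\<epsilon>/2)" using q1 ep by (intro ln_powr_bound) auto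
      hence "ln (real q) \<le> (2/\<epsilon>) * V" unfolding V_def by (simp add: mult.commute)
      hence "1 + ln (real q) \<le> V + (2/\<epsilon>) * V" using V1 by simp
      hence "4 * real q * (1 + ln (real q)) \<le> 4 * real q * (V + (2/\<epsilon>) * V)" using qpos by (intro mult_left_mono) auto
      also have "\<dots> = c' * real q * V" unfolding c'_def by (simp add: algebra_simps)
      finally show ?thesis using NB by simp
    qed
    have h4: "T1 \<le> (2 * C\<tau>)^k * (K' * U) * ((A * K * B^(k-1) / real q + 1) * (4 * B + c' * real q * V))"
      unfolding T1_def using hX hq hl Ct K'0 U1 qpos c'0 V1 A1 B1 K1
      by (intro mult_left_mono mult_mono) (auto intro!: add_nonneg_nonneg mult_nonneg_nonneg)
    have Bk1: "B \<le> B^(k-1)"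
    proof -
      have "B^1 \<le> B^(k-1)" using B1 k3 by (intro power_increasing) auto
      thus ?thesis by simp
    qed
    have h5: "Bm * ((A * K * B^(k-1) / real q + 1) * (4 * B + c' * real q * V)) \<le> V * (4 * K + c' * K + 4 + c') * R"
    proof -
      have BkB: "B^(k-1) * B = B^k"
      proof -
        have e: "k = Suc (k - 1)" using k3 by simp
        show ?thesis by (subst (2) e) (simp add: power_Suc2)
      qed
      have e: "Bm * ((A * K * B^(k-1) / real q + 1) * (4 * B + c' * real q * V)) =
          4 * K * (A * Bm * B^k / real q) + c' * K * V * (A * Bm * B^(k-1)) + 4 * (Bm * B) + c' * V * (real q * Bm)"
        using qpos BkB[symmetric] by (simp add: field_simps)
      have a1: "4 * K * (A * Bm * B^k / real q) \<le> 4 * K * V * (A * Bm * B^k / real q)"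
      proof -
        have x0: "0 \<le> 4 * K * (A * Bm * B^k / real q)" using K1 A1 Bm1 B1 qpos by simp
        have "1 * (4 * K * (A * Bm * B^k / real q)) \<le> V * (4 * K * (A * Bm * B^k / real q))"
          by (rule mult_right_mono[OF V1 x0])
        thus ?thesis by (simp add: algebra_simps)
      qed
      have a2: "4 * (Bm * B) \<le> 4 * V * (A * Bm * B^(k-1))"
      proof -
        have "Bm * B \<le> 1 * (Bm * B^(k-1))" using Bk1 Bm1 by simp
        also have "\<dots> \<le> A * (Bm * B^(k-1))" using A1 Bm1 B1 by (intro mult_right_mono) auto
        also have "\<dots> \<le> V * (A * Bm * B^(k-1))"
        proof -
          have x0: "0 \<le> A * Bm * B^(k-1)" using A1 Bm1 B1 by simp
          show ?thesis using mult_right_mono[OF V1 x0] by (simp add: algebra_simps)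
        qed
        finally show ?thesis by simp
      qed
      have "V * (4 * K + c' * K + 4 + c') * R = 4 * K * V * (A * Bm * B^k / real q) + (c' * K + 4 + c') * V * (A * Bm * B^k / real q)
         + (4 * K + c' * K + 4 + c') * V * (A * Bm * B^(k-1)) + (4 * K + c' * K + 4 + c') * V * (real q * Bm)"
        unfolding R_def by (simp add: algebra_simps)
      moreover have "0 \<le> (c' * K + 4 + c') * V * (A * Bm * B^k / real q)" using c'0 K1 V1 A1 Bm1 B1 qpos by simp
      moreover have "c' * K * V * (A * Bm * B^(k-1)) + 4 * V * (A * Bm * B^(k-1)) \<le> (4 * K + c' * K + 4 + c') * V * (A * Bm * B^(k-1))"
        using K1 c'0 V1 A1 Bm1 B1 by (simp add: algebra_simps mult_nonneg_nonneg)
      moreover have "c' * V * (real q * Bm) \<le> (4 * K + c' * K + 4 + c') * V * (real q * Bm)"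
        using K1 c'0 V1 qpos Bm1 by (intro mult_right_mono) auto
      ultimately show ?thesis unfolding e using a1 a2 by linarith
    qed
    have h6: "A * B^(k-1) \<le> A * Bm * B^(k-1)" using A1 Bm1 B1 by (simp add: mult_le_cancel_right1 mult.assoc)
    have Rge: "A * Bm * B^(k-1) \<le> R" unfolding R_def using A1 Bm1 B1 qpos by simp
    have "A * Bm * B^(k-1) \<ge> 0" using A1 Bm1 B1 by simp
    hence R0: "R \<ge> 0" using Rge by linarith
    have T0b: "Bm * T0 \<le> 2 * real (k-1) * 3^(k-2) * (P * R)"
    proof -
      have "Bm * T0 \<le> Bm * (2 * real (k-1) * 3^(k-2) * (A * B^(k-1)))" using h3 Bm1 by (intro mult_left_mono) auto
      also have "\<dots> = 2 * real (k-1) * 3^(k-2) * (A * Bm * B^(k-1))" by (simp add: algebra_simps)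
      also have "\<dots> \<le> 2 * real (k-1) * 3^(k-2) * (1 * R)" using Rge by (intro mult_left_mono) auto
      also have "\<dots> \<le> 2 * real (k-1) * 3^(k-2) * (P * R)" using P1 R0 by (intro mult_left_mono mult_right_mono) auto
      finally show ?thesis .
    qed
    have T1b: "Bm * T1 \<le> (2 * C\<tau>)^k * K' * (4 * K + c' * K + 4 + c') * (P * R)"
    proof -
      have "Bm * T1 \<le> Bm * ((2 * C\<tau>)^k * (K' * U) * ((A * K * B^(k-1) / real q + 1) * (4 * B + c' * real q * V)))"
        using h4 Bm1 by (intro mult_left_mono) auto
      also have "\<dots> = (2 * C\<tau>)^k * K' * U * (Bm * ((A * K * B^(k-1) / real q + 1) * (4 * B + c' * real q * V)))"
        by (simp add: algebra_simps)
      also have "\<dots> \<le> (2 * C\<tau>)^k * K' * U * (V * (4 * K + c' * K + 4 + c') * R)"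
        using h5 Ct K'0 U1 by (intro mult_left_mono) auto
      also have "\<dots> = (2 * C\<tau>)^k * K' * (4 * K + c' * K + 4 + c') * ((U * V) * R)" by (simp add: algebra_simps)
      also have "\<dots> \<le> (2 * C\<tau>)^k * K' * (4 * K + c' * K + 4 + c') * (P * R)"
        using UVP R0 Ct K'0 K1 c'0 by (intro mult_left_mono mult_right_mono) auto
      finally show ?thesis .
    qed
    have RR: "R = A * B ^ M * (1 / real q + 1 / B + real q / (A * B ^ k))"
    proof -
      have BM: "B ^ M = Bm * B^k" unfolding Bm_def using Mk by (simp add: power_add[symmetric])
      have BkB: "B^k = B^(k-1) * B"
      proof -
        have e: "k = Suc (k - 1)" using k3 by simp
        show ?thesis by (subst (1) e) (simp add: power_Suc2)
      qed
      show ?thesis unfolding R_def BM using A1 B1 qpos BkB by (simp add: field_simps)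
    qed
    have "2^M * real (2*N+1) ^ (M - k) * (T0 + T1) \<le> 2^M * (3^(M-k) * Bm) * (T0 + T1)"
    proof -
      have "T0 \<ge> 0" unfolding T0_def using A1 by simp
      moreover have "T1 \<ge> 0" unfolding T1_def using Ct q1 by (simp add: add_nonneg_nonneg)
      ultimately show ?thesis using h2 by (intro mult_left_mono mult_right_mono) auto
    qed
    also have "\<dots> = 2^M * 3^(M-k) * (Bm * T0 + Bm * T1)" by (simp add: algebra_simps)
    also have "\<dots> \<le> 2^M * 3^(M-k) * (2 * real (k-1) * 3^(k-2) * (P * R) + (2 * C\<tau>)^k * K' * (4 * K + c' * K + 4 + c') * (P * R))"
      using T0b T1b by (intro mult_left_mono add_mono) auto
    also have "\<dots> = C0 * (P * R)" unfolding C0_def by (simp add: algebra_simps)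
    also have "\<dots> = C0 * A * B ^ (2^(k-1)) * (1 / real q + 1 / B + real q / (A * B ^ k)) * (A * B * real q) powr \<epsilon>"
      unfolding RR P_def M_def by (simp add: algebra_simps)
    finally show ?thesis using kb unfolding M_def by linarith
  qed
  show ?thesis using C0pos main by blast
qed

end
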